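(* Let $M\in\mathbb{N}^*$, $\mathcal{L}_M=\{0,\dots,M\}$, $x_0\in\mathcal{L}_M$, $y_0\in\mathbb{N}$. Let $\lambda:\mathbb{R}_+\times\mathcal{L}_M\to\mathbb{R}_+$ be such that $t\mapsto\lambda(t,x)$ is càdlàg for every $x$, $\lambda(t,M)=0$ for all $t$, and $\lambda$ is bounded on $[0,T]\times\mathcal{L}_M$ for every $T>0$. Let $f:\mathbb{R}\to\mathbb{R}$ be continuous with $0<\underline{f}\le f\le\bar f<\infty$. Let $(\mu^k_{ij})_{i,j\ge0}$, $k\in\mathcal{L}_M$, satisfy $\mu^k_{ij}\ge0$ for $i\ne j$, $\mu^k_{ii}\le0$, $\sum_{j\ge0}\mu^k_{ij}=0$, and $\sup_i|\mu^k_{ii}|<\infty$ for each $k$. Then the equation $P'(t)=\Psi(t,(P(t))_+)$, $P(0)=P_0$, admits a unique solution on $\mathbb{R}_+$ (with values in the summable families), and this solution satisfies $P(t)\ge0$ componentwise and $|P(t)|=1$ for all $t\ge0$.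
   Context: Let $E$ be the set of real families $u=(u^i_j)_{0\le i\le M,\,j\ge0}$, $E_+$ the subset with all entries $\ge0$, $E_+^*$ the subset with all entries $>0$, and $|u|=\sum_{i=0}^M\sum_{j\ge0}|u^i_j|$. For $x\in E$, $(x)_+$ denotes the componentwise positive part. $P_0$ is given by $(P_0)^{x_0}_{y_0}=1$ and all other entries $0$. For $x\in E_+$ set $\varphi(x,i)=\frac{\sum_{l\ge0}f(l)x^i_l}{\sum_{l\ge0}x^i_l}$ and $$(\Psi(t,x))^i_j=\sum_{k\ge0}\mu^i_{kj}x^i_k+\mathbf{1}_{\{i\ge1\}}\frac{\lambda(t,i-1)}{\varphi(x,i-1)}f(j)x^{i-1}_j-\mathbf{1}_{\{i\le M-1\}}\frac{\lambda(t,i)}{\varphi(x,i)}f(j)x^i_j,$$ with the convention that $\frac{x^i_j}{\varphi(x,i)}=0$ when $x^i_l=0$ for all $l$ (continuous extension from $E_+^*$). *)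

theory Defs
  imports "HOL-Analysis.Analysis"
begin

text \<open>Families u = (u^i_j), 0 <= i <= M, j >= 0, are represented as functions
  nat => nat => real; only the entries with i <= M are meaningful, and elements of E
  (inside solutions) are required to vanish for i > M.\<close>

type_synonym family = "nat \<Rightarrow> nat \<Rightarrow> real"

definition summable_family :: "nat \<Rightarrow> family \<Rightarrow> bool" where
  "summable_family M u \<longleftrightarrow> (\<forall>i\<le>M. summable (\<lambda>j. \<bar>u i j\<bar>))"

definition l1norm :: "nat \<Rightarrow> family \<Rightarrow> real" where
  "l1norm M u = (\<Sum>i\<le>M. (\<Sum>j. \<bar>u i j\<bar>))"

definition pos_part :: "family \<Rightarrow> family" where
  "pos_part x = (\<lambda>i j. max 0 (x i j))"

definition P0 :: "nat \<Rightarrow> nat \<Rightarrow> family" where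
  "P0 x0 y0 = (\<lambda>i j. if i = x0 \<and> j = y0 then 1 else 0)"

definition phi :: "(real \<Rightarrow> real) \<Rightarrow> family \<Rightarrow> nat \<Rightarrow> real" where
  "phi f x i = (\<Sum>l. f (real l) * x i l) / (\<Sum>l. x i l)"

definition ratio :: "(real \<Rightarrow> real) \<Rightarrow> family \<Rightarrow> nat \<Rightarrow> nat \<Rightarrow> real" where
  "ratio f x i j = (if (\<forall>l. x i l = 0) then 0 else x i j / phi f x i)"

text \<open>mu k i j stands for mu^k_{ij}; lam t i for lambda(t,i).\<close>
definition Psi :: "nat \<Rightarrow> (real \<Rightarrow> nat \<Rightarrow> real) \<Rightarrow> (real \<Rightarrow> real)
     \<Rightarrow> (nat \<Rightarrow> nat \<Rightarrow> nat \<Rightarrow> real) \<Rightarrow> real \<Rightarrow> family \<Rightarrow> family" where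
  "Psi M lam f mu t x = (\<lambda>i j.
      (\<Sum>k. mu i k j * x i k)
      + (if 1 \<le> i then lam t (i - 1) * f (real j) * ratio f x (i - 1) j else 0)
      - (if i \<le> M - 1 then lam t i * f (real j) * ratio f x i j else 0))"

definition cadlag_on_nonneg :: "(real \<Rightarrow> real) \<Rightarrow> bool" where
  "cadlag_on_nonneg g \<longleftrightarrow>
     (\<forall>t\<ge>0. continuous (at_right t) g) \<and>
     (\<forall>t>0. \<exists>l. (g \<longlongrightarrow> l) (at_left t))"

text \<open>Solution of P' = Psi(t,(P)_+), P(0) = P0 on R_+, understood in integral
  (mild) form: P is a continuous E-valued map (for the l1 norm), and every
  component satisfies P(t) = P0 + int_0^t Psi(s,(P(s))_+) ds.\<close>
definition is_solution :: "nat \<Rightarrow> (real \<Rightarrow> nat \<Rightarrow> real) \<Rightarrow> (real \<Rightarrow> real)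
     \<Rightarrow> (nat \<Rightarrow> nat \<Rightarrow> nat \<Rightarrow> real) \<Rightarrow> nat \<Rightarrow> nat \<Rightarrow> (real \<Rightarrow> family) \<Rightarrow> bool" where
  "is_solution M lam f mu x0 y0 P \<longleftrightarrow>
     (\<forall>t\<ge>0. \<forall>i j. M < i \<longrightarrow> P t i j = 0) \<and>
     (\<forall>t\<ge>0. summable_family M (P t)) \<and>
     (\<forall>t\<ge>0. ((\<lambda>s. l1norm M (\<lambda>i j. P s i j - P t i j)) \<longlongrightarrow> 0) (at t within {0..})) \<and>
     (\<forall>t\<ge>0. \<forall>i\<le>M. \<forall>j.
        ((\<lambda>s. Psi M lam f mu s (pos_part (P s)) i j) has_integral (P t i j - P0 x0 y0 i j)) {0..t})"

end

theory Submission
  imports Defs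
begin


locale setting =
  fixes M :: nat and lam :: "real \<Rightarrow> nat \<Rightarrow> real" and f :: "real \<Rightarrow> real"
    and mu :: "nat \<Rightarrow> nat \<Rightarrow> nat \<Rightarrow> real" and fl fu Bm :: real
  assumes M_pos: "1 \<le> M"
    and lam_nonneg: "\<forall>t\<ge>0. \<forall>x\<le>M. 0 \<le> lam t x"
    and lam_cadlag: "\<forall>x\<le>M. cadlag_on_nonneg (\<lambda>t. lam t x)"
    and lam_M: "\<forall>t\<ge>0. lam t M = 0"
    and lam_bdd: "\<forall>T>0. \<exists>B. \<forall>t\<in>{0..T}. \<forall>x\<le>M. \<bar>lam t x\<bar> \<le> B"
    and f_cont: "continuous_on UNIV f"
    and fl_pos: "0 < fl" and f_lo: "\<And>x. fl \<le> f x" and f_hi: "\<And>x. f x \<le> fu"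
    and mu_offdiag: "\<forall>k\<le>M. \<forall>i j. i \<noteq> j \<longrightarrow> 0 \<le> mu k i j"
    and mu_diag: "\<forall>k\<le>M. \<forall>i. mu k i i \<le> 0"
    and mu_rows: "\<forall>k\<le>M. \<forall>i. summable (\<lambda>j. mu k i j) \<and> (\<Sum>j. mu k i j) = 0"
    and mu_bdd: "\<And>k i. k \<le> M \<Longrightarrow> \<bar>mu k i i\<bar> \<le> Bm"
begin

abbreviation N where "N u \<equiv> l1norm M u"
abbreviation SF where "SF u \<equiv> summable_family M u"

lemma fu_pos: "0 < fu" using fl_pos f_lo[of 0] f_hi[of 0] by linarith
lemma Bm_nonneg: "0 \<le> Bm" using mu_bdd[of 0 0] by linarith

lemma N_nonneg: "SF u \<Longrightarrow> 0 \<le> N u"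
  unfolding l1norm_def summable_family_def by (intro sum_nonneg suminf_nonneg) auto

lemma N_partial:
  assumes "SF u" shows "(\<Sum>i\<le>M. \<Sum>j<J. \<bar>u i j\<bar>) \<le> N u"
  unfolding l1norm_def
proof (rule sum_mono)
  fix i assume "i \<in> {..M}"
  then show "(\<Sum>j<J. \<bar>u i j\<bar>) \<le> (\<Sum>j. \<bar>u i j\<bar>)"
    using assms unfolding summable_family_def by (intro sum_le_suminf) auto
qed

lemma PS:
  assumes "\<And>J. (\<Sum>i\<le>M. \<Sum>j<J. \<bar>u i j\<bar>) \<le> C"
  shows "SF u" "N u \<le> C"
proof -
  have row: "summable (\<lambda>j. \<bar>u i j\<bar>)" if "i \<le> M" for i
  proof (rule summableI_nonneg_bounded)
    fix J
    have "(\<Sum>j<J. \<bar>u i j\<bar>) \<le> (\<Sum>i\<le>M. \<Sum>j<J. \<bar>u i j\<bar>)"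
      using that by (intro member_le_sum) (auto intro: sum_nonneg)
    then show "(\<Sum>j<J. \<bar>u i j\<bar>) \<le> C" using assms[of J] by linarith
  qed auto
  then show "SF u" unfolding summable_family_def by auto
  have "(\<lambda>J. \<Sum>i\<le>M. \<Sum>j<J. \<bar>u i j\<bar>) \<longlonglongrightarrow> N u"
    unfolding l1norm_def by (intro tendsto_sum summable_LIMSEQ row) auto
  then show "N u \<le> C" by (rule LIMSEQ_le_const2) (use assms in auto)
qed

lemma comp_le:
  assumes "SF u" "i \<le> M" shows "\<bar>u i j\<bar> \<le> N u"
proof -
  have "\<bar>u i j\<bar> \<le> (\<Sum>j<Suc j. \<bar>u i j\<bar>)" by (intro member_le_sum) auto
  also have "\<dots> \<le> (\<Sum>i\<le>M. \<Sum>j<Suc j. \<bar>u i j\<bar>)"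
    using assms by (intro member_le_sum) (auto intro: sum_nonneg)
  also have "\<dots> \<le> N u" by (rule N_partial[OF assms(1)])
  finally show ?thesis .
qed

lemma N_comb:
  assumes "SF a" "SF b" "\<And>i j. i \<le> M \<Longrightarrow> \<bar>u i j\<bar> \<le> \<bar>a i j\<bar> + \<bar>b i j\<bar>"
  shows "SF u" "N u \<le> N a + N b"
proof -
  have "(\<Sum>i\<le>M. \<Sum>j<J. \<bar>u i j\<bar>) \<le> N a + N b" for J
  proof -
    have "(\<Sum>i\<le>M. \<Sum>j<J. \<bar>u i j\<bar>) \<le> (\<Sum>i\<le>M. \<Sum>j<J. \<bar>a i j\<bar> + \<bar>b i j\<bar>)"
      using assms(3) by (intro sum_mono) auto
    also have "\<dots> = (\<Sum>i\<le>M. \<Sum>j<J. \<bar>a i j\<bar>) + (\<Sum>i\<le>M. \<Sum>j<J. \<bar>b i j\<bar>)"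
      by (simp add: sum.distrib)
    also have "\<dots> \<le> N a + N b" using N_partial[OF assms(1)] N_partial[OF assms(2)] by (intro add_mono) auto
    finally show ?thesis .
  qed
  then show "SF u" "N u \<le> N a + N b" using PS by blast+
qed

lemma N_mono:
  assumes "SF a" "\<And>i j. i \<le> M \<Longrightarrow> \<bar>u i j\<bar> \<le> \<bar>a i j\<bar>"
  shows "SF u" "N u \<le> N a"
proof -
  have z: "SF (\<lambda>i j. 0)" unfolding summable_family_def by auto
  have "N (\<lambda>i j. 0) = 0" unfolding l1norm_def by simp
  then show "SF u" "N u \<le> N a" using N_comb[OF assms(1) z, of u] assms(2) by auto
qed

lemma N_sym: assumes "SF a" "SF b"
  shows "N (\<lambda>i j. a i j - b i j) = N (\<lambda>i j. b i j - a i j)"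
  unfolding l1norm_def by (simp add: abs_minus_commute)

lemma SF_diff: assumes "SF a" "SF b" shows "SF (\<lambda>i j. a i j - b i j)"
  using N_comb(1)[OF assms] by auto

lemma N_tri:
  assumes "SF a" "SF b" "SF c"
  shows "N (\<lambda>i j. a i j - c i j) \<le> N (\<lambda>i j. a i j - b i j) + N (\<lambda>i j. b i j - c i j)"
  by (rule N_comb(2)[OF SF_diff[OF assms(1,2)] SF_diff[OF assms(2,3)]]) auto

end


context setting begin

definition Amap :: "family \<Rightarrow> family" where
  "Amap x = (\<lambda>i j. \<Sum>k. mu i k j * x i k)"

lemma row_abs:
  assumes "i \<le> M"
  shows "summable (\<lambda>j. \<bar>mu i k j\<bar>)" "(\<Sum>j. \<bar>mu i k j\<bar>) = - 2 * mu i k k"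
proof -
  have eq: "\<bar>mu i k j\<bar> = mu i k j + (if j = k then - 2 * mu i k k else 0)" for j
    using mu_offdiag mu_diag assms by (cases "j = k") auto
  have s1: "summable (\<lambda>j. mu i k j)" and s0: "(\<Sum>j. mu i k j) = 0" using mu_rows assms by auto
  have s2: "(\<lambda>j. if j = k then - 2 * mu i k k else 0) sums (- 2 * mu i k k)"
    using sums_single[of k "\<lambda>_. - 2 * mu i k k"] by simp
  have "(\<lambda>j. mu i k j + (if j = k then - 2 * mu i k k else 0)) sums (0 + - 2 * mu i k k)"
    using sums_add[OF s1[THEN summable_sums, unfolded s0] s2] .
  then have "(\<lambda>j. \<bar>mu i k j\<bar>) sums (- 2 * mu i k k)" unfolding eq by simp
  then show "summable (\<lambda>j. \<bar>mu i k j\<bar>)" "(\<Sum>j. \<bar>mu i k j\<bar>) = - 2 * mu i k k"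
    by (auto simp: sums_iff)
qed

lemma row_abs_le:
  assumes "i \<le> M" shows "(\<Sum>j. \<bar>mu i k j\<bar>) \<le> 2 * Bm"
  using row_abs(2)[OF assms, of k] mu_bdd[OF assms, of k] by linarith

lemma mu_abs_le:
  assumes "i \<le> M" shows "\<bar>mu i k j\<bar> \<le> 2 * Bm"
proof -
  have "\<bar>mu i k j\<bar> \<le> (\<Sum>j. \<bar>mu i k j\<bar>)"
    using sum_le_suminf[OF row_abs(1)[OF assms, of k], of "{j}"] by simp
  with row_abs_le[OF assms, of k] show ?thesis by linarith
qed

lemma A_summ:
  assumes "i \<le> M" "summable (\<lambda>k. \<bar>d k\<bar>)"
  shows "summable (\<lambda>k. \<bar>mu i k j\<bar> * \<bar>d k\<bar>)" "summable (\<lambda>k. mu i k j * d k)"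
proof -
  show 1: "summable (\<lambda>k. \<bar>mu i k j\<bar> * \<bar>d k\<bar>)"
    by (rule summable_comparison_test'[OF summable_mult[OF assms(2), of "2*Bm"]])
       (use mu_abs_le[OF assms(1)] in \<open>auto intro: mult_right_mono\<close>)
  show "summable (\<lambda>k. mu i k j * d k)"
    by (rule summable_rabs_cancel) (use 1 in \<open>simp add: abs_mult\<close>)
qed

lemma A_lin_bound:
  assumes "i \<le> M" "summable (\<lambda>k. \<bar>d k\<bar>)"
  shows "(\<Sum>j<J. \<bar>\<Sum>k. mu i k j * d k\<bar>) \<le> 2 * Bm * (\<Sum>k. \<bar>d k\<bar>)"
proof -
  have "(\<Sum>j<J. \<bar>\<Sum>k. mu i k j * d k\<bar>) \<le> (\<Sum>j<J. \<Sum>k. \<bar>mu i k j\<bar> * \<bar>d k\<bar>)"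
  proof (rule sum_mono)
    fix j
    have "\<bar>\<Sum>k. mu i k j * d k\<bar> \<le> (\<Sum>k. \<bar>mu i k j * d k\<bar>)"
      using summable_rabs[of "\<lambda>k. mu i k j * d k"] A_summ[OF assms, of j] by (simp add: abs_mult)
    then show "\<bar>\<Sum>k. mu i k j * d k\<bar> \<le> (\<Sum>k. \<bar>mu i k j\<bar> * \<bar>d k\<bar>)" by (simp add: abs_mult)
  qed
  also have "\<dots> = (\<Sum>k. \<Sum>j<J. \<bar>mu i k j\<bar> * \<bar>d k\<bar>)"
    by (rule suminf_sum[symmetric]) (rule A_summ[OF assms])
  also have "\<dots> \<le> (\<Sum>k. 2 * Bm * \<bar>d k\<bar>)"
  proof (rule suminf_le)
    fix k
    have "(\<Sum>j<J. \<bar>mu i k j\<bar>) \<le> (\<Sum>j. \<bar>mu i k j\<bar>)"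
      using row_abs(1)[OF assms(1)] by (intro sum_le_suminf) auto
    also have "\<dots> \<le> 2 * Bm" by (rule row_abs_le[OF assms(1)])
    finally have "(\<Sum>j<J. \<bar>mu i k j\<bar>) * \<bar>d k\<bar> \<le> 2 * Bm * \<bar>d k\<bar>" by (intro mult_right_mono) auto
    then show "(\<Sum>j<J. \<bar>mu i k j\<bar> * \<bar>d k\<bar>) \<le> 2 * Bm * \<bar>d k\<bar>" by (simp add: sum_distrib_right)
  next
    show "summable (\<lambda>k. \<Sum>j<J. \<bar>mu i k j\<bar> * \<bar>d k\<bar>)"
      by (intro summable_sum A_summ[OF assms])
    show "summable (\<lambda>k. 2 * Bm * \<bar>d k\<bar>)" by (intro summable_mult assms)
  qed
  also have "\<dots> = 2 * Bm * (\<Sum>k. \<bar>d k\<bar>)" by (rule suminf_mult[OF assms(2)])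
  finally show ?thesis .
qed

lemma A_lip:
  assumes "i \<le> M" "summable (\<lambda>k. \<bar>x i k\<bar>)" "summable (\<lambda>k. \<bar>y i k\<bar>)"
  shows "(\<Sum>j<J. \<bar>Amap x i j - Amap y i j\<bar>) \<le> 2 * Bm * (\<Sum>k. \<bar>x i k - y i k\<bar>)"
proof -
  have d: "summable (\<lambda>k. \<bar>x i k - y i k\<bar>)"
    by (rule summable_comparison_test'[OF summable_add[OF assms(2,3)]]) auto
  have "Amap x i j - Amap y i j = (\<Sum>k. mu i k j * (x i k - y i k))" for j
    unfolding Amap_def using suminf_diff[OF A_summ(2)[OF assms(1,2)] A_summ(2)[OF assms(1,3)]]
    by (simp add: right_diff_distrib)
  then show ?thesis using A_lin_bound[OF assms(1) d] by simp
qed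

end


lemma key_arith:
  fixes Sx Sy Fx Fy D fl fu :: real
  assumes fl: "0 < fl" and Sy: "0 < Sy" and SS: "Sy \<le> Sx" and Fx: "fl * Sx \<le> Fx" and Fy: "fl * Sy \<le> Fy"
    and dS: "\<bar>Sx - Sy\<bar> \<le> D" and dF: "\<bar>Fx - Fy\<bar> \<le> fu * D" and fu: "0 \<le> fu"
  shows "Sy * \<bar>Sx / Fx - Sy / Fy\<bar> \<le> (1 / fl + fu / fl^2) * D"
proof -
  have Sx: "0 < Sx" using Sy SS by linarith
  have Fxp: "0 < Fx" using fl Sx Fx by (smt (verit) mult_pos_pos)
  have Fyp: "0 < Fy" using fl Sy Fy by (smt (verit) mult_pos_pos)
  have D0: "0 \<le> D" using dS by linarith
  have eq: "Sx / Fx - Sy / Fy = ((Sx - Sy) * Fy + Sy * (Fy - Fx)) / (Fx * Fy)"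
    using Fxp Fyp by (simp add: field_simps)
  have num: "\<bar>(Sx - Sy) * Fy + Sy * (Fy - Fx)\<bar> \<le> D * Fy + Sy * (fu * D)"
  proof -
    have "\<bar>(Sx - Sy) * Fy\<bar> \<le> D * Fy" using dS Fyp by (simp add: abs_mult mult_right_mono)
    moreover have "\<bar>Sy * (Fy - Fx)\<bar> \<le> Sy * (fu * D)"
      using dF Sy by (simp add: abs_mult abs_minus_commute mult_left_mono)
    ultimately show ?thesis by (smt (verit))
  qed
  have "Sy * \<bar>Sx / Fx - Sy / Fy\<bar> = Sy * \<bar>(Sx - Sy) * Fy + Sy * (Fy - Fx)\<bar> / (Fx * Fy)"
    using Fxp Fyp Sy unfolding eq by (simp add: abs_mult)
  also have "\<dots> \<le> Sy * (D * Fy + Sy * (fu * D)) / (Fx * Fy)"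
    using num Sy Fxp Fyp by (intro divide_right_mono mult_left_mono) auto
  also have "\<dots> = D * (Sy / Fx) + fu * D * (Sy * Sy / (Fx * Fy))"
    using Fxp Fyp by (simp add: field_simps)
  also have "\<dots> \<le> D * (1 / fl) + fu * D * (1 / fl^2)"
  proof (intro add_mono mult_left_mono)
    have SyF: "fl * Sy \<le> Fx" using mult_left_mono[OF SS, of fl] fl Fx by linarith
    show "Sy / Fx \<le> 1 / fl" using Fxp fl SyF by (simp add: field_simps)
    have "Sy * Sy \<le> (Fx / fl) * (Fy / fl)"
    proof (rule mult_mono)
      show "Sy \<le> Fx / fl" using SyF fl by (simp add: field_simps)
      show "Sy \<le> Fy / fl" using Fy fl by (simp add: field_simps)
    qed (use Fxp fl Sy in auto)
    then show "Sy * Sy / (Fx * Fy) \<le> 1 / fl^2" using Fxp Fyp fl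
      by (simp add: field_simps power2_eq_square)
    show "0 \<le> fu * D" using fu D0 by simp
  qed (use D0 in auto)
  finally show ?thesis by (simp add: algebra_simps)
qed

context setting begin

definition Ssum :: "(nat \<Rightarrow> real) \<Rightarrow> real" where "Ssum x = (\<Sum>l. x l)"
definition Fsum :: "(nat \<Rightarrow> real) \<Rightarrow> real" where "Fsum x = (\<Sum>l. f (real l) * x l)"
definition rho :: "(nat \<Rightarrow> real) \<Rightarrow> real" where "rho x = Ssum x / Fsum x"

lemma ratio_eq: "ratio f X i j = X i j * rho (X i)"
  unfolding ratio_def phi_def rho_def Ssum_def Fsum_def
  by (cases "\<forall>l. X i l = 0") (simp_all add: divide_divide_eq_right mult.commute)

lemma f_abs: "\<bar>f r\<bar> \<le> fu" and f_pos: "0 < f r"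
  using f_lo[of r] f_hi[of r] fl_pos by auto

lemma fx_summable:
  assumes "summable (\<lambda>l. \<bar>x l\<bar>)" shows "summable (\<lambda>l. f (real l) * x l)"
proof -
  have "summable (\<lambda>l. \<bar>f (real l) * x l\<bar>)"
  proof (rule summable_comparison_test'[OF summable_mult[OF assms, of fu]])
    fix n show "norm \<bar>f (real n) * x n\<bar> \<le> fu * \<bar>x n\<bar>"
      by (simp add: abs_mult mult_right_mono f_abs)
  qed
  then show ?thesis by (rule summable_rabs_cancel)
qed

lemma sums_bounds:
  assumes "summable x" "\<And>l. 0 \<le> x l"
  shows "fl * Ssum x \<le> Fsum x" "Fsum x \<le> fu * Ssum x" "0 \<le> Ssum x"
proof -
  have sa: "summable (\<lambda>l. \<bar>x l\<bar>)" using assms by simp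
  have sf: "summable (\<lambda>l. f (real l) * x l)" by (rule fx_summable[OF sa])
  have "fl * Ssum x = (\<Sum>l. fl * x l)" unfolding Ssum_def by (rule suminf_mult[OF assms(1), symmetric])
  also have "\<dots> \<le> Fsum x" unfolding Fsum_def
  proof (rule suminf_le)
    fix l show "fl * x l \<le> f (real l) * x l" by (rule mult_right_mono[OF f_lo assms(2)])
  qed (auto intro: summable_mult assms(1) sf)
  finally show "fl * Ssum x \<le> Fsum x" .
  have "Fsum x \<le> (\<Sum>l. fu * x l)" unfolding Fsum_def
  proof (rule suminf_le)
    fix l show "f (real l) * x l \<le> fu * x l" by (rule mult_right_mono[OF f_hi assms(2)])
  qed (auto intro: summable_mult assms(1) sf)
  also have "\<dots> = fu * Ssum x" unfolding Ssum_def by (rule suminf_mult[OF assms(1)])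
  finally show "Fsum x \<le> fu * Ssum x" .
  show "0 \<le> Ssum x" unfolding Ssum_def using assms by (intro suminf_nonneg) auto
qed

lemma rho_bounds:
  assumes "summable x" "\<And>l. 0 \<le> x l"
  shows "0 \<le> rho x" "rho x \<le> 1 / fl"
proof -
  note b = sums_bounds[OF assms]
  have F0: "0 \<le> Fsum x" using b(1,3) fl_pos by (meson mult_nonneg_nonneg less_imp_le order_trans)
  show "0 \<le> rho x" unfolding rho_def using b F0 by simp
  show "rho x \<le> 1 / fl"
  proof (cases "Ssum x = 0")
    case True then show ?thesis unfolding rho_def using fl_pos by simp
  next
    case False
    then have "0 < Ssum x" using b by simp
    then have "0 < Fsum x" using b(1) fl_pos by (meson mult_pos_pos order_less_le_trans)
    then show ?thesis unfolding rho_def using b(1) fl_pos by (simp add: field_simps)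
  qed
qed

definition KR :: real where "KR = 2 / fl + fu / fl^2"

lemma R_lip_wlog:
  assumes sx: "summable x" and sy: "summable y" and x0: "\<And>l. 0 \<le> x l" and y0: "\<And>l. 0 \<le> y l"
    and le: "Ssum y \<le> Ssum x"
  shows "(\<Sum>j<J. \<bar>x j * rho x - y j * rho y\<bar>) \<le> KR * (\<Sum>k. \<bar>x k - y k\<bar>)"
proof -
  have sxa: "summable (\<lambda>l. \<bar>x l\<bar>)" and sya: "summable (\<lambda>l. \<bar>y l\<bar>)" using sx sy x0 y0 by auto
  have sd: "summable (\<lambda>k. \<bar>x k - y k\<bar>)"
    by (rule summable_comparison_test'[OF summable_add[OF sxa sya]]) auto
  define D where "D = (\<Sum>k. \<bar>x k - y k\<bar>)"
  have D0: "0 \<le> D" unfolding D_def using sd by (intro suminf_nonneg) auto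
  have rx0: "0 \<le> rho x" and rx1: "rho x \<le> 1 / fl" using rho_bounds[OF sx x0] by auto
  have step1: "(\<Sum>j<J. \<bar>x j * rho x - y j * rho y\<bar>) \<le> (\<Sum>j<J. rho x * \<bar>x j - y j\<bar> + y j * \<bar>rho x - rho y\<bar>)"
  proof (rule sum_mono)
    fix j
    have e: "x j * rho x - y j * rho y = rho x * (x j - y j) + y j * (rho x - rho y)" by (simp add: algebra_simps)
    have "\<bar>rho x * (x j - y j) + y j * (rho x - rho y)\<bar> \<le> \<bar>rho x * (x j - y j)\<bar> + \<bar>y j * (rho x - rho y)\<bar>"
      by (rule abs_triangle_ineq)
    also have "\<dots> = rho x * \<bar>x j - y j\<bar> + y j * \<bar>rho x - rho y\<bar>"
      using rx0 y0[of j] by (simp add: abs_mult)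
    finally show "\<bar>x j * rho x - y j * rho y\<bar> \<le> rho x * \<bar>x j - y j\<bar> + y j * \<bar>rho x - rho y\<bar>"
      unfolding e .
  qed
  have step2: "(\<Sum>j<J. rho x * \<bar>x j - y j\<bar> + y j * \<bar>rho x - rho y\<bar>)
      = rho x * (\<Sum>j<J. \<bar>x j - y j\<bar>) + (\<Sum>j<J. y j) * \<bar>rho x - rho y\<bar>"
    by (simp add: sum.distrib sum_distrib_left sum_distrib_right)
  have p1: "(\<Sum>j<J. \<bar>x j - y j\<bar>) \<le> D" unfolding D_def using sd by (intro sum_le_suminf) auto
  have p2: "(\<Sum>j<J. y j) \<le> Ssum y" unfolding Ssum_def using sy y0 by (intro sum_le_suminf) auto
  have p3: "0 \<le> (\<Sum>j<J. \<bar>x j - y j\<bar>)" by (rule sum_nonneg) auto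
  have t1: "rho x * (\<Sum>j<J. \<bar>x j - y j\<bar>) \<le> (1/fl) * D"
    by (rule mult_mono[OF rx1 p1]) (use fl_pos D0 p3 in auto)
  have t2: "(\<Sum>j<J. y j) * \<bar>rho x - rho y\<bar> \<le> Ssum y * \<bar>rho x - rho y\<bar>"
    by (rule mult_right_mono[OF p2]) simp
  have t3: "Ssum y * \<bar>rho x - rho y\<bar> \<le> (1 / fl + fu / fl^2) * D"
  proof (cases "Ssum y = 0")
    case True then show ?thesis using D0 fl_pos fu_pos by simp
  next
    case False
    then have Sy: "0 < Ssum y" using sums_bounds(3)[OF sy y0] by simp
    have dS: "\<bar>Ssum x - Ssum y\<bar> \<le> D"
    proof -
      have "Ssum x - Ssum y = (\<Sum>k. x k - y k)" unfolding Ssum_def by (rule suminf_diff[OF sx sy])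
      also have "\<bar>\<dots>\<bar> \<le> D" unfolding D_def by (rule summable_rabs[OF sd])
      finally show ?thesis .
    qed
    have dF: "\<bar>Fsum x - Fsum y\<bar> \<le> fu * D"
    proof -
      have sfx: "summable (\<lambda>l. f (real l) * x l)" by (rule fx_summable[OF sxa])
      have sfy: "summable (\<lambda>l. f (real l) * y l)" by (rule fx_summable[OF sya])
      have sfu: "summable (\<lambda>k. fu * \<bar>x k - y k\<bar>)" by (rule summable_mult[OF sd])
      have pw: "\<bar>f (real k) * (x k - y k)\<bar> \<le> fu * \<bar>x k - y k\<bar>" for k
        by (simp add: abs_mult mult_right_mono f_abs)
      have sab: "summable (\<lambda>k. \<bar>f (real k) * (x k - y k)\<bar>)"
        by (rule summable_comparison_test'[OF sfu]) (use pw in simp)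
      have "Fsum x - Fsum y = (\<Sum>k. f (real k) * (x k - y k))"
        unfolding Fsum_def using suminf_diff[OF sfx sfy] by (simp add: right_diff_distrib)
      also have "\<bar>\<dots>\<bar> \<le> (\<Sum>k. \<bar>f (real k) * (x k - y k)\<bar>)"
        by (rule summable_rabs[OF sab])
      also have "\<dots> \<le> (\<Sum>k. fu * \<bar>x k - y k\<bar>)"
        by (rule suminf_le[OF pw sab sfu])
      also have "\<dots> = fu * D" unfolding D_def by (rule suminf_mult[OF sd])
      finally show ?thesis .
    qed
    have fu0: "0 \<le> fu" using fu_pos by simp
    show ?thesis unfolding rho_def
      by (rule key_arith[OF fl_pos Sy le sums_bounds(1)[OF sx x0] sums_bounds(1)[OF sy y0] dS dF fu0])
  qed
  have "(\<Sum>j<J. \<bar>x j * rho x - y j * rho y\<bar>) \<le> (1/fl) * D + (1 / fl + fu / fl^2) * D"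
    using step1 step2 t1 t2 t3 by linarith
  also have "\<dots> = KR * D" unfolding KR_def by (simp add: algebra_simps)
  finally show ?thesis unfolding D_def .
qed

lemma R_lip:
  assumes sx: "summable x" and sy: "summable y" and x0: "\<And>l. 0 \<le> x l" and y0: "\<And>l. 0 \<le> y l"
  shows "(\<Sum>j<J. \<bar>x j * rho x - y j * rho y\<bar>) \<le> KR * (\<Sum>k. \<bar>x k - y k\<bar>)"
proof (cases "Ssum y \<le> Ssum x")
  case True then show ?thesis using R_lip_wlog[OF assms] by simp
next
  case False
  then have "(\<Sum>j<J. \<bar>y j * rho y - x j * rho x\<bar>) \<le> KR * (\<Sum>k. \<bar>y k - x k\<bar>)"
    using R_lip_wlog[OF sy sx y0 x0] by simp
  then show ?thesis by (simp add: abs_minus_commute)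
qed

end


context setting begin

definition Rm :: "family \<Rightarrow> nat \<Rightarrow> nat \<Rightarrow> real" where
  "Rm X i j = f (real j) * (X i j * rho (X i))"

lemma Psi_decomp:
  "Psi M lam f mu t X i j = Amap X i j + (if 1 \<le> i then lam t (i - 1) * Rm X (i - 1) j else 0)
      - (if i \<le> M - 1 then lam t i * Rm X i j else 0)"
  unfolding Psi_def Amap_def Rm_def ratio_eq by (simp add: mult.assoc)

lemma pos_part_summ:
  fixes x :: family
  assumes "summable (\<lambda>k. \<bar>x i k\<bar>)"
  shows "summable (\<lambda>k. pos_part x i k)" "summable (\<lambda>k. \<bar>pos_part x i k\<bar>)"
proof -
  show "summable (\<lambda>k. \<bar>pos_part x i k\<bar>)"
    by (rule summable_comparison_test'[OF assms]) (auto simp: pos_part_def)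
  then show "summable (\<lambda>k. pos_part x i k)" by (rule summable_rabs_cancel)
qed

lemma pos_part_diff: "\<bar>pos_part x i k - pos_part y i k\<bar> \<le> \<bar>x i k - y i k\<bar>"
  unfolding pos_part_def by auto

lemma pos_part_nonneg: "0 \<le> pos_part x i k"
  unfolding pos_part_def by auto

lemma diff_summ:
  fixes x y :: family
  assumes "summable (\<lambda>k. \<bar>x i k\<bar>)" "summable (\<lambda>k. \<bar>y i k\<bar>)"
  shows "summable (\<lambda>k. \<bar>x i k - y i k\<bar>)"
  by (rule summable_comparison_test'[OF summable_add[OF assms]]) auto

lemma pp_D_le:
  fixes x y :: family
  assumes "summable (\<lambda>k. \<bar>x i k\<bar>)" "summable (\<lambda>k. \<bar>y i k\<bar>)"
  shows "(\<Sum>k. \<bar>pos_part x i k - pos_part y i k\<bar>) \<le> (\<Sum>k. \<bar>x i k - y i k\<bar>)"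
  by (rule suminf_le[OF pos_part_diff diff_summ[of "pos_part x" i "pos_part y", OF pos_part_summ(2)[of x i, OF assms(1)] pos_part_summ(2)[of y i, OF assms(2)]]
      diff_summ[of x i y, OF assms]])

lemma Rm_lip:
  fixes x y :: family
  assumes "summable (\<lambda>k. \<bar>x i k\<bar>)" "summable (\<lambda>k. \<bar>y i k\<bar>)"
  shows "(\<Sum>j<J. \<bar>Rm (pos_part x) i j - Rm (pos_part y) i j\<bar>) \<le> fu * KR * (\<Sum>k. \<bar>x i k - y i k\<bar>)"
proof -
  let ?X = "pos_part x i" and ?Y = "pos_part y i"
  have "(\<Sum>j<J. \<bar>Rm (pos_part x) i j - Rm (pos_part y) i j\<bar>)
      \<le> (\<Sum>j<J. fu * \<bar>?X j * rho ?X - ?Y j * rho ?Y\<bar>)"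
  proof (rule sum_mono)
    fix j
    have "\<bar>Rm (pos_part x) i j - Rm (pos_part y) i j\<bar> = \<bar>f (real j)\<bar> * \<bar>?X j * rho ?X - ?Y j * rho ?Y\<bar>"
      unfolding Rm_def by (simp add: abs_mult[symmetric] right_diff_distrib)
    also have "\<dots> \<le> fu * \<bar>?X j * rho ?X - ?Y j * rho ?Y\<bar>" by (intro mult_right_mono f_abs) auto
    finally show "\<bar>Rm (pos_part x) i j - Rm (pos_part y) i j\<bar> \<le> fu * \<bar>?X j * rho ?X - ?Y j * rho ?Y\<bar>" .
  qed
  also have "\<dots> = fu * (\<Sum>j<J. \<bar>?X j * rho ?X - ?Y j * rho ?Y\<bar>)" by (simp add: sum_distrib_left)
  also have "\<dots> \<le> fu * (KR * (\<Sum>k. \<bar>?X k - ?Y k\<bar>))"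
    by (intro mult_left_mono R_lip pos_part_summ assms pos_part_nonneg) (use fu_pos in auto)
  also have "\<dots> \<le> fu * (KR * (\<Sum>k. \<bar>x i k - y i k\<bar>))"
    by (intro mult_left_mono pp_D_le assms) (use fu_pos fl_pos in \<open>auto simp: KR_def\<close>)
  finally show ?thesis by (simp add: mult.assoc)
qed

definition Lc :: "real \<Rightarrow> real" where "Lc Lam = 2 * Bm + 2 * Lam * fu * KR"

lemma KR_pos: "0 < KR" unfolding KR_def using fl_pos fu_pos by (intro add_pos_pos divide_pos_pos) auto

lemma Psi_lip:
  assumes sx: "SF x" and sy: "SF y" and Lam: "\<And>i. i \<le> M \<Longrightarrow> \<bar>lam t i\<bar> \<le> Lam"
  shows "(\<Sum>i\<le>M. \<Sum>j<J. \<bar>Psi M lam f mu t (pos_part x) i j - Psi M lam f mu t (pos_part y) i j\<bar>)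
         \<le> Lc Lam * N (\<lambda>i j. x i j - y i j)"
proof -
  define D where "D i = (\<Sum>k. \<bar>x i k - y i k\<bar>)" for i
  have Lam0: "0 \<le> Lam" using Lam[of 0] by linarith
  have rx: "summable (\<lambda>k. \<bar>x i k\<bar>)" and ry: "summable (\<lambda>k. \<bar>y i k\<bar>)" if "i \<le> M" for i
    using sx sy that unfolding summable_family_def by auto
  have D0: "0 \<le> D i" if "i \<le> M" for i unfolding D_def using diff_summ[of x i y, OF rx ry] that by (intro suminf_nonneg) auto
  let ?c = "Lam * (fu * KR)"
  have per_i: "(\<Sum>j<J. \<bar>Psi M lam f mu t (pos_part x) i j - Psi M lam f mu t (pos_part y) i j\<bar>)
       \<le> 2 * Bm * D i + (if 1 \<le> i then ?c * D (i - 1) else 0) + ?c * D i" if i: "i \<le> M" for i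
  proof -
    let ?X = "pos_part x" and ?Y = "pos_part y"
    have pt: "\<bar>Psi M lam f mu t ?X i j - Psi M lam f mu t ?Y i j\<bar> \<le> \<bar>Amap ?X i j - Amap ?Y i j\<bar>
       + (if 1 \<le> i then Lam * \<bar>Rm ?X (i - 1) j - Rm ?Y (i - 1) j\<bar> else 0)
       + Lam * \<bar>Rm ?X i j - Rm ?Y i j\<bar>" for j
    proof -
      have a: "\<bar>lam t (i - 1) * Rm ?X (i - 1) j - lam t (i - 1) * Rm ?Y (i - 1) j\<bar> \<le> Lam * \<bar>Rm ?X (i - 1) j - Rm ?Y (i - 1) j\<bar>"
        unfolding right_diff_distrib[symmetric] abs_mult using Lam[of "i - 1"] i by (intro mult_right_mono) auto
      have b: "\<bar>lam t i * Rm ?X i j - lam t i * Rm ?Y i j\<bar> \<le> Lam * \<bar>Rm ?X i j - Rm ?Y i j\<bar>"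
        unfolding right_diff_distrib[symmetric] abs_mult using Lam[of i] i by (intro mult_right_mono) auto
      have c: "0 \<le> Lam * \<bar>Rm ?X i j - Rm ?Y i j\<bar>" using Lam0 by simp
      have tri: "\<And>a1 a2 b1 b2 c1 c2::real. \<bar>(a1 + b1 - c1) - (a2 + b2 - c2)\<bar> \<le> \<bar>a1-a2\<bar> + \<bar>b1-b2\<bar> + \<bar>c1-c2\<bar>"
        by arith
      have bb: "\<bar>(if 1 \<le> i then lam t (i - 1) * Rm ?X (i - 1) j else 0) - (if 1 \<le> i then lam t (i - 1) * Rm ?Y (i - 1) j else 0)\<bar>
          \<le> (if 1 \<le> i then Lam * \<bar>Rm ?X (i - 1) j - Rm ?Y (i - 1) j\<bar> else 0)"
        using a by auto
      have cc: "\<bar>(if i \<le> M - 1 then lam t i * Rm ?X i j else 0) - (if i \<le> M - 1 then lam t i * Rm ?Y i j else 0)\<bar>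
          \<le> Lam * \<bar>Rm ?X i j - Rm ?Y i j\<bar>"
        using b c by auto
      show ?thesis unfolding Psi_decomp using tri[of "Amap ?X i j"] bb cc by (smt (verit))

    qed
    have "(\<Sum>j<J. \<bar>Psi M lam f mu t ?X i j - Psi M lam f mu t ?Y i j\<bar>) \<le>
        (\<Sum>j<J. \<bar>Amap ?X i j - Amap ?Y i j\<bar>)
       + (if 1 \<le> i then Lam * (\<Sum>j<J. \<bar>Rm ?X (i - 1) j - Rm ?Y (i - 1) j\<bar>) else 0)
       + Lam * (\<Sum>j<J. \<bar>Rm ?X i j - Rm ?Y i j\<bar>)"
    proof -
      have "(\<Sum>j<J. \<bar>Psi M lam f mu t ?X i j - Psi M lam f mu t ?Y i j\<bar>) \<le> (\<Sum>j<J. \<bar>Amap ?X i j - Amap ?Y i j\<bar>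
       + (if 1 \<le> i then Lam * \<bar>Rm ?X (i - 1) j - Rm ?Y (i - 1) j\<bar> else 0)
       + Lam * \<bar>Rm ?X i j - Rm ?Y i j\<bar>)" by (rule sum_mono) (rule pt)
      then show ?thesis by (cases "1 \<le> i") (simp_all add: sum.distrib sum_distrib_left)
    qed
    also have "\<dots> \<le> 2 * Bm * D i + (if 1 \<le> i then ?c * D (i - 1) else 0) + ?c * D i"
    proof (intro add_mono)
      have "(\<Sum>j<J. \<bar>Amap ?X i j - Amap ?Y i j\<bar>) \<le> 2 * Bm * (\<Sum>k. \<bar>?X i k - ?Y i k\<bar>)"
        by (rule A_lip[of i "pos_part x" "pos_part y", OF i pos_part_summ(2)[of x i, OF rx[OF i]] pos_part_summ(2)[of y i, OF ry[OF i]]])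
      also have "\<dots> \<le> 2 * Bm * D i" unfolding D_def
        by (intro mult_left_mono pp_D_le rx ry i) (use Bm_nonneg in auto)
      finally show "(\<Sum>j<J. \<bar>Amap ?X i j - Amap ?Y i j\<bar>) \<le> 2 * Bm * D i" .
      show "(if 1 \<le> i then Lam * (\<Sum>j<J. \<bar>Rm ?X (i - 1) j - Rm ?Y (i - 1) j\<bar>) else 0)
            \<le> (if 1 \<le> i then ?c * D (i - 1) else 0)"
        using mult_left_mono[OF Rm_lip[of x "i - 1" y J, OF rx ry] Lam0] i unfolding D_def
        by (auto simp: mult.assoc)
      show "Lam * (\<Sum>j<J. \<bar>Rm ?X i j - Rm ?Y i j\<bar>) \<le> ?c * D i"
        using mult_left_mono[OF Rm_lip[of x i y J, OF rx ry] Lam0] i unfolding D_def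
        by (auto simp: mult.assoc)
    qed
    finally show ?thesis .
  qed
  have "(\<Sum>i\<le>M. \<Sum>j<J. \<bar>Psi M lam f mu t (pos_part x) i j - Psi M lam f mu t (pos_part y) i j\<bar>)
      \<le> (\<Sum>i\<le>M. 2 * Bm * D i + (if 1 \<le> i then ?c * D (i - 1) else 0) + ?c * D i)"
    using per_i by (intro sum_mono) auto
  also have "\<dots> = 2 * Bm * (\<Sum>i\<le>M. D i) + (\<Sum>i\<le>M. (if 1 \<le> i then ?c * D (i - 1) else 0)) + ?c * (\<Sum>i\<le>M. D i)"
    by (simp add: sum.distrib sum_distrib_left)
  also have "(\<Sum>i\<le>M. (if 1 \<le> i then ?c * D (i - 1) else 0)) \<le> ?c * (\<Sum>i\<le>M. D i)"
  proof -
    obtain m where m: "M = Suc m" using M_pos by (cases M) auto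
    have "(\<Sum>i\<le>M. (if 1 \<le> i then ?c * D (i - 1) else 0)) = (\<Sum>i\<le>m. ?c * D i)"
      unfolding m sum.atMost_Suc_shift by simp
    also have "\<dots> \<le> (\<Sum>i\<le>M. ?c * D i)"
      using D0 Lam0 fu_pos KR_pos unfolding m by (intro sum_mono2) auto
    finally show ?thesis by (simp add: sum_distrib_left)
  qed
  also have "(\<Sum>i\<le>M. D i) = N (\<lambda>i j. x i j - y i j)" unfolding D_def l1norm_def by simp
  finally show ?thesis unfolding Lc_def by (simp add: algebra_simps)
qed

lemma Psi_zero: "Psi M lam f mu t (pos_part (\<lambda>i j. 0)) = (\<lambda>i j. 0)"
  unfolding Psi_def ratio_def pos_part_def by (auto simp: fun_eq_iff)

lemma SF_zero: "SF (\<lambda>i j. 0)" unfolding summable_family_def by auto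

lemma Psi_bound:
  assumes sx: "SF x" and Lam: "\<And>i. i \<le> M \<Longrightarrow> \<bar>lam t i\<bar> \<le> Lam"
  shows "(\<Sum>i\<le>M. \<Sum>j<J. \<bar>Psi M lam f mu t (pos_part x) i j\<bar>) \<le> Lc Lam * N x"
  using Psi_lip[OF sx SF_zero Lam, of J] unfolding Psi_zero by simp

end


lemma rc_measurable:
  fixes g :: "real \<Rightarrow> real"
  assumes rc: "\<And>t. continuous (at_right t) g"
  shows "g \<in> borel_measurable borel"
proof (rule borel_measurable_LIMSEQ_real)
  define h where "h n s = g (real_of_int \<lceil>real (Suc n) * s\<rceil> / real (Suc n))" for n s
  show "h n \<in> borel_measurable borel" for n
  proof -
    have m1: "(\<lambda>s. real (Suc n) * s) \<in> borel_measurable borel" by measurable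
    have m: "(\<lambda>s. \<lceil>real (Suc n) * s\<rceil>) \<in> measurable borel (count_space UNIV)"
      by (rule measurable_compose[OF m1 measurable_real_ceiling])
    have c: "(\<lambda>s. g (real_of_int k / real (Suc n))) \<in> borel_measurable borel" for k
      by (rule measurable_const) simp
    show ?thesis unfolding h_def
      by (rule measurable_compose_countable[where f = "\<lambda>k s. g (real_of_int k / real (Suc n))", OF c m])
  qed
  fix s :: real
  assume "s \<in> space borel"
  define y where "y n = real_of_int \<lceil>real (Suc n) * s\<rceil> / real (Suc n)" for n
  have yge: "s \<le> y n" for n
  proof -
    have "real (Suc n) * s \<le> real_of_int \<lceil>real (Suc n) * s\<rceil>" by (rule le_of_int_ceiling)
    then show ?thesis unfolding y_def by (simp add: field_simps)
  qed
  have ylt: "y n \<le> s + 1 / real (Suc n)" for n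
  proof -
    have "real_of_int \<lceil>real (Suc n) * s\<rceil> \<le> real (Suc n) * s + 1" by linarith
    then have "y n \<le> (real (Suc n) * s + 1) / real (Suc n)" unfolding y_def
      by (intro divide_right_mono) auto
    also have "\<dots> = s + 1 / real (Suc n)" by (simp add: field_simps)
    finally show ?thesis .
  qed
  have inv: "(\<lambda>n. 1 / real (Suc n)) \<longlonglongrightarrow> 0"
    using LIMSEQ_inverse_real_of_nat by (simp add: inverse_eq_divide)
  have "(\<lambda>n. s + 1 / real (Suc n)) \<longlonglongrightarrow> s + 0"
    by (intro tendsto_add tendsto_const inv)
  then have up: "(\<lambda>n. s + 1 / real (Suc n)) \<longlonglongrightarrow> s" by simp
  have yl: "y \<longlonglongrightarrow> s"
    by (rule tendsto_sandwich[OF always_eventually always_eventually tendsto_const up]) (use yge ylt in auto)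
  have "continuous (at s within {s..}) g"
    using rc[of s] by (simp add: at_within_Ici_at_right)
  then have "(g \<circ> y) \<longlonglongrightarrow> g s"
    unfolding continuous_within_sequentially using yl yge by simp
  then show "(\<lambda>n. h n s) \<longlonglongrightarrow> g s" unfolding h_def y_def[symmetric] by (simp add: o_def)
qed

context setting begin

definition lt :: "nat \<Rightarrow> real \<Rightarrow> real" where "lt i s = lam (max 0 s) i"

lemma lt_rc:
  assumes "i \<le> M" shows "continuous (at_right s) (lt i)"
proof (cases "s < 0")
  case True
  have ev: "eventually (\<lambda>u. lt i u = lam 0 i) (at_right s)"
  proof -
    have "eventually (\<lambda>u. u < 0) (at_right s)" using True unfolding eventually_at_right_field
      by (intro exI[of _ 0]) auto
    then show ?thesis by eventually_elim (simp add: lt_def)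
  qed
  have "((\<lambda>u. lam 0 i) \<longlongrightarrow> lt i s) (at_right s)" using True by (simp add: lt_def)
  then have "(lt i \<longlongrightarrow> lt i s) (at_right s)" by (rule tendsto_cong[THEN iffD1, rotated]) (use ev in \<open>simp add: eventually_mono\<close>)
  then show ?thesis by (simp add: continuous_within)
next
  case False
  then have s0: "s \<ge> 0" by simp
  have "continuous (at_right s) (\<lambda>t. lam t i)"
    using lam_cadlag assms s0 unfolding cadlag_on_nonneg_def by auto
  then have c: "((\<lambda>t. lam t i) \<longlongrightarrow> lam s i) (at_right s)" by (simp add: continuous_within)
  have ev: "eventually (\<lambda>u. lam u i = lt i u) (at_right s)"
    using s0 unfolding lt_def eventually_at_right_field by (intro exI[of _ "s+1"]) auto
  have ltf: "lt i = (\<lambda>u. lam (max 0 u) i)" by (simp add: fun_eq_iff lt_def)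
  have "(lt i \<longlongrightarrow> lt i s) (at_right s)"
    using tendsto_cong[THEN iffD1, OF ev c] s0 unfolding ltf by simp
  then show ?thesis by (simp add: continuous_within)
qed

lemma lt_measurable: "i \<le> M \<Longrightarrow> lt i \<in> borel_measurable borel"
  by (rule rc_measurable[OF lt_rc])

lemma lam_bound_T: "\<exists>B\<ge>0. \<forall>s\<in>{0..T}. \<forall>x\<le>M. \<bar>lam s x\<bar> \<le> B"
proof -
  obtain B where B: "\<forall>s\<in>{0..max 1 T}. \<forall>x\<le>M. \<bar>lam s x\<bar> \<le> B" using lam_bdd by (meson zero_less_one less_max_iff_disj)
  have "(0::real) \<in> {0..max 1 T}" by simp
  then have "\<bar>lam 0 0\<bar> \<le> B" using B by blast
  then have "0 \<le> B" by linarith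
  with B show ?thesis by (intro exI[of _ B]) auto
qed

lemma lam_prod_integrable:
  assumes i: "i \<le> M" and c: "continuous_on {0..t} c"
  shows "(\<lambda>s. lam s i * c s) integrable_on {0..t}"
proof -
  obtain B where B: "B \<ge> 0" "\<forall>s\<in>{0..t}. \<forall>x\<le>M. \<bar>lam s x\<bar> \<le> B" using lam_bound_T by blast
  have m: "lt i \<in> borel_measurable (lebesgue_on {0..t})"
    using lt_measurable[OF i] by (intro measurable_restrict_space1 measurable_completion) simp
  have b: "bounded (lt i ` {0..t})"
    unfolding bounded_iff using B i by (intro exI[of _ B]) (auto simp: lt_def)
  have "(\<lambda>s. lt i s * c s) absolutely_integrable_on {0..t}"
    by (rule absolutely_integrable_bounded_measurable_product_real[OF m _ b absolutely_integrable_continuous_real[OF c]]) simp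
  then have "(\<lambda>s. lt i s * c s) integrable_on {0..t}" using absolutely_integrable_on_def by blast
  then show ?thesis by (rule integrable_eq) (auto simp: lt_def)
qed

end


context setting begin

definition ncont :: "(real \<Rightarrow> family) \<Rightarrow> bool" where
  "ncont x \<longleftrightarrow> (\<forall>t\<ge>0. ((\<lambda>s. N (\<lambda>i j. x s i j - x t i j)) \<longlongrightarrow> 0) (at t within {0..}))"

definition good :: "(real \<Rightarrow> family) \<Rightarrow> bool" where
  "good x \<longleftrightarrow> (\<forall>t\<ge>0. \<forall>i j. M < i \<longrightarrow> x t i j = 0) \<and> (\<forall>t\<ge>0. SF (x t)) \<and> ncont x"

lemma row_le_N: assumes "SF u" "i \<le> M" shows "(\<Sum>k. \<bar>u i k\<bar>) \<le> N u"
  unfolding l1norm_def using assms unfolding summable_family_def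
  by (intro member_le_sum suminf_nonneg) auto

lemma cont2:
  assumes cx: "ncont x" and cy: "ncont y" and C: "0 \<le> C"
    and b: "\<And>s t. 0 \<le> s \<Longrightarrow> 0 \<le> t \<Longrightarrow> \<bar>g s - g t\<bar> \<le> C * N (\<lambda>i j. x s i j - x t i j) + C * N (\<lambda>i j. y s i j - y t i j)"
  shows "continuous_on {0..} g"
  unfolding continuous_on_def
proof (intro ballI)
  fix t :: real assume t: "t \<in> {0..}"
  have l: "((\<lambda>s. C * N (\<lambda>i j. x s i j - x t i j) + C * N (\<lambda>i j. y s i j - y t i j)) \<longlongrightarrow> C * 0 + C * 0) (at t within {0..})"
    using cx cy t unfolding ncont_def by (intro tendsto_add tendsto_mult tendsto_const) auto
  have ev: "eventually (\<lambda>s. norm (g s - g t) \<le> C * N (\<lambda>i j. x s i j - x t i j) + C * N (\<lambda>i j. y s i j - y t i j)) (at t within {0..})"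
    unfolding eventually_at_filter using b t by (auto intro!: always_eventually)
  have "((\<lambda>s. g s - g t) \<longlongrightarrow> 0) (at t within {0..})"
    by (rule Lim_null_comparison[OF ev]) (use l in simp)
  then show "(g \<longlongrightarrow> g t) (at t within {0..})" by (simp add: LIM_zero_iff)
qed

lemma cont1:
  assumes cx: "ncont x" and C: "0 \<le> C"
    and b: "\<And>s t. 0 \<le> s \<Longrightarrow> 0 \<le> t \<Longrightarrow> \<bar>g s - g t\<bar> \<le> C * N (\<lambda>i j. x s i j - x t i j)"
  shows "continuous_on {0..} g"
proof (rule cont2[OF cx cx C])
  fix s t :: real assume "0 \<le> s" "0 \<le> t"
  then show "\<bar>g s - g t\<bar> \<le> C * N (\<lambda>i j. x s i j - x t i j) + C * N (\<lambda>i j. x s i j - x t i j)"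
    using b[of s t] C by (smt (verit) N_nonneg mult_nonneg_nonneg)
qed

lemma N_diff_le:
  assumes "SF a" "SF b" shows "\<bar>N a - N b\<bar> \<le> N (\<lambda>i j. a i j - b i j)"
proof -
  have d1: "SF (\<lambda>i j. a i j - b i j)" by (rule SF_diff[OF assms])
  have d2: "SF (\<lambda>i j. b i j - a i j)" by (rule SF_diff[OF assms(2,1)])
  have "N a \<le> N b + N (\<lambda>i j. a i j - b i j)" by (rule N_comb(2)[OF assms(2) d1]) auto
  moreover have "N b \<le> N a + N (\<lambda>i j. b i j - a i j)" by (rule N_comb(2)[OF assms(1) d2]) auto
  ultimately show ?thesis using N_sym[OF assms] by linarith
qed

lemma N_cont:
  assumes cx: "ncont x" and cy: "ncont y" and sx: "\<And>t. 0 \<le> t \<Longrightarrow> SF (x t)" and sy: "\<And>t. 0 \<le> t \<Longrightarrow> SF (y t)"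
  shows "continuous_on {0..} (\<lambda>s. N (\<lambda>i j. x s i j - y s i j))"
proof (rule cont2[OF cx cy, of 1])
  fix s t :: real assume st: "0 \<le> s" "0 \<le> t"
  have "\<bar>N (\<lambda>i j. x s i j - y s i j) - N (\<lambda>i j. x t i j - y t i j)\<bar>
      \<le> N (\<lambda>i j. (x s i j - y s i j) - (x t i j - y t i j))"
    by (rule N_diff_le[OF SF_diff[OF sx sy] SF_diff[OF sx sy]]) (use st in auto)
  also have "\<dots> \<le> N (\<lambda>i j. x s i j - x t i j) + N (\<lambda>i j. y s i j - y t i j)"
    by (rule N_comb(2)[OF SF_diff[OF sx sx] SF_diff[OF sy sy]]) (use st in auto)
  finally show "\<bar>N (\<lambda>i j. x s i j - y s i j) - N (\<lambda>i j. x t i j - y t i j)\<bar>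
      \<le> 1 * N (\<lambda>i j. x s i j - x t i j) + 1 * N (\<lambda>i j. y s i j - y t i j)" by simp
qed simp

lemma ncont_zero: "ncont (\<lambda>s i j. 0)"
  unfolding ncont_def l1norm_def by simp

lemma N_cont1:
  assumes cx: "ncont x" and sx: "\<And>t. 0 \<le> t \<Longrightarrow> SF (x t)"
  shows "continuous_on {0..} (\<lambda>s. N (x s))"
  using N_cont[OF cx ncont_zero sx] SF_zero by simp

lemma A_comp:
  assumes "SF x" "SF y" "i \<le> M"
  shows "\<bar>Amap (pos_part x) i j - Amap (pos_part y) i j\<bar> \<le> 2 * Bm * N (\<lambda>i j. x i j - y i j)"
proof -
  have rx: "summable (\<lambda>k. \<bar>x i k\<bar>)" and ry: "summable (\<lambda>k. \<bar>y i k\<bar>)"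
    using assms unfolding summable_family_def by auto
  have "\<bar>Amap (pos_part x) i j - Amap (pos_part y) i j\<bar> \<le> (\<Sum>j'<Suc j. \<bar>Amap (pos_part x) i j' - Amap (pos_part y) i j'\<bar>)"
    by (intro member_le_sum) auto
  also have "\<dots> \<le> 2 * Bm * (\<Sum>k. \<bar>pos_part x i k - pos_part y i k\<bar>)"
    by (rule A_lip[of i "pos_part x" "pos_part y", OF assms(3) pos_part_summ(2)[of x i, OF rx] pos_part_summ(2)[of y i, OF ry]])
  also have "\<dots> \<le> 2 * Bm * (\<Sum>k. \<bar>x i k - y i k\<bar>)"
    by (intro mult_left_mono pp_D_le rx ry) (use Bm_nonneg in auto)
  also have "\<dots> \<le> 2 * Bm * N (\<lambda>i j. x i j - y i j)"
    by (intro mult_left_mono row_le_N[OF SF_diff[OF assms(1,2)] assms(3), simplified]) (use Bm_nonneg in auto)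
  finally show ?thesis .
qed

lemma R_comp:
  assumes "SF x" "SF y" "i \<le> M"
  shows "\<bar>Rm (pos_part x) i j - Rm (pos_part y) i j\<bar> \<le> fu * KR * N (\<lambda>i j. x i j - y i j)"
proof -
  have rx: "summable (\<lambda>k. \<bar>x i k\<bar>)" and ry: "summable (\<lambda>k. \<bar>y i k\<bar>)"
    using assms unfolding summable_family_def by auto
  have "\<bar>Rm (pos_part x) i j - Rm (pos_part y) i j\<bar> \<le> (\<Sum>j'<Suc j. \<bar>Rm (pos_part x) i j' - Rm (pos_part y) i j'\<bar>)"
    by (intro member_le_sum) auto
  also have "\<dots> \<le> fu * KR * (\<Sum>k. \<bar>x i k - y i k\<bar>)"
    by (rule Rm_lip[of x i y, OF rx ry])
  also have "\<dots> \<le> fu * KR * N (\<lambda>i j. x i j - y i j)"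
    by (intro mult_left_mono row_le_N[OF SF_diff[OF assms(1,2)] assms(3), simplified])
       (use fu_pos KR_pos in auto)
  finally show ?thesis .
qed

lemma Psi_integrable:
  assumes cx: "ncont x" and sx: "\<And>t. 0 \<le> t \<Longrightarrow> SF (x t)" and i: "i \<le> M"
  shows "(\<lambda>s. Psi M lam f mu s (pos_part (x s)) i j) integrable_on {0..t}"
proof -
  have sub: "{0..t} \<subseteq> {0..}" by auto
  have cA: "continuous_on {0..t} (\<lambda>s. Amap (pos_part (x s)) i j)"
    by (rule continuous_on_subset[OF cont1[OF cx, of "2 * Bm"] sub])
       (use Bm_nonneg A_comp[OF sx sx i] in auto)
  have cR: "continuous_on {0..t} (\<lambda>s. Rm (pos_part (x s)) i' j)" if "i' \<le> M" for i'
    by (rule continuous_on_subset[OF cont1[OF cx, of "fu * KR"] sub])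
       (use fu_pos KR_pos R_comp[OF sx sx that] in auto)
  have i1: "(\<lambda>s. if 1 \<le> i then lam s (i - 1) * Rm (pos_part (x s)) (i - 1) j else 0) integrable_on {0..t}"
    by (cases "1 \<le> i") (use lam_prod_integrable[OF _ cR] i in auto)
  have i2: "(\<lambda>s. if i \<le> M - 1 then lam s i * Rm (pos_part (x s)) i j else 0) integrable_on {0..t}"
    by (cases "i \<le> M - 1") (use lam_prod_integrable[OF _ cR] i in auto)
  have "(\<lambda>s. Amap (pos_part (x s)) i j + (if 1 \<le> i then lam s (i - 1) * Rm (pos_part (x s)) (i - 1) j else 0)
      - (if i \<le> M - 1 then lam s i * Rm (pos_part (x s)) i j else 0)) integrable_on {0..t}"
    by (intro integrable_diff integrable_add i1 i2 integrable_continuous_real cA)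
  then show ?thesis unfolding Psi_decomp .
qed

lemma SI:
  fixes g :: "nat \<Rightarrow> nat \<Rightarrow> real \<Rightarrow> real"
  assumes g: "\<And>i j. i \<le> M \<Longrightarrow> (g i j has_integral G i j) {a..b}" and h: "h integrable_on {a..b}"
    and b: "\<And>s J. s \<in> {a..b} \<Longrightarrow> (\<Sum>i\<le>M. \<Sum>j<J. \<bar>g i j s\<bar>) \<le> h s"
  shows "(\<Sum>i\<le>M. \<Sum>j<J. \<bar>G i j\<bar>) \<le> integral {a..b} h"
proof -
  define \<sigma> where "\<sigma> i j = sgn (G i j)" for i j
  have hi: "((\<lambda>s. \<Sum>i\<le>M. \<Sum>j<J. \<sigma> i j * g i j s) has_integral (\<Sum>i\<le>M. \<Sum>j<J. \<sigma> i j * G i j)) {a..b}"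
    by (intro has_integral_sum has_integral_mult_right g) auto
  have "(\<Sum>i\<le>M. \<Sum>j<J. \<bar>G i j\<bar>) = (\<Sum>i\<le>M. \<Sum>j<J. \<sigma> i j * G i j)"
    unfolding \<sigma>_def by (simp add: sgn_mult_self_eq abs_sgn mult.commute)
  also have "\<dots> \<le> integral {a..b} h"
  proof (rule has_integral_le[OF hi integrable_integral[OF h]])
    fix s assume s: "s \<in> {a..b}"
    have "(\<Sum>i\<le>M. \<Sum>j<J. \<sigma> i j * g i j s) \<le> (\<Sum>i\<le>M. \<Sum>j<J. \<bar>g i j s\<bar>)"
    proof (intro sum_mono)
      fix i j
      have "\<sigma> i j * g i j s \<le> \<bar>\<sigma> i j * g i j s\<bar>" by simp
      also have "\<dots> \<le> \<bar>g i j s\<bar>" unfolding \<sigma>_def abs_mult by (intro mult_left_le_one_le) (auto simp: sgn_real_def)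
      finally show "\<sigma> i j * g i j s \<le> \<bar>g i j s\<bar>" .
    qed
    also have "\<dots> \<le> h s" by (rule b[OF s])
    finally show "(\<Sum>i\<le>M. \<Sum>j<J. \<sigma> i j * g i j s) \<le> h s" .
  qed
  finally show ?thesis .
qed

end


lemma power_has_integral:
  assumes "0 \<le> t"
  shows "((\<lambda>s::real. s ^ n) has_integral t ^ Suc n / real (Suc n)) {0..t}"
proof -
  have "((\<lambda>s::real. s ^ n) has_integral (t ^ Suc n / real (Suc n) - 0 ^ Suc n / real (Suc n))) {0..t}"
  proof (rule fundamental_theorem_of_calculus[OF assms])
    fix x :: real assume "x \<in> {0..t}"
    have "((\<lambda>s. s ^ Suc n / real (Suc n)) has_real_derivative (real (Suc n) * x ^ n / real (Suc n))) (at x within {0..t})"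
      by (intro derivative_eq_intros) auto
    then show "((\<lambda>s. s ^ Suc n / real (Suc n)) has_vector_derivative x ^ n) (at x within {0..t})"
      by (simp add: has_real_derivative_iff_has_vector_derivative)
  qed
  then show ?thesis by simp
qed

lemma gron:
  fixes a :: "nat \<Rightarrow> real \<Rightarrow> real"
  assumes L: "0 \<le> L" and K: "0 \<le> K"
    and a0: "\<And>t. t \<in> {0..T} \<Longrightarrow> a 0 t \<le> K"
    and aS: "\<And>n t. t \<in> {0..T} \<Longrightarrow> a (Suc n) t \<le> L * integral {0..t} (a n)"
    and ac: "\<And>n. continuous_on {0..T} (a n)"
  shows "t \<in> {0..T} \<Longrightarrow> a n t \<le> K * (L * t) ^ n / fact n"
proof (induction n arbitrary: t)
  case 0 then show ?case using a0 by simp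
next
  case (Suc n)
  have t: "0 \<le> t" "t \<le> T" using Suc.prems by auto
  have ai: "a n integrable_on {0..t}"
    by (rule integrable_continuous_real, rule continuous_on_subset[OF ac]) (use t in auto)
  have pi: "((\<lambda>s. K * L ^ n / fact n * s ^ n) has_integral K * L ^ n / fact n * (t ^ Suc n / real (Suc n))) {0..t}"
    by (intro has_integral_mult_right power_has_integral t)
  have "integral {0..t} (a n) \<le> K * L ^ n / fact n * (t ^ Suc n / real (Suc n))"
  proof (rule has_integral_le[OF integrable_integral[OF ai] pi])
    fix s assume s: "s \<in> {0..t}"
    then have "a n s \<le> K * (L * s) ^ n / fact n" using Suc.IH t by auto
    then show "a n s \<le> K * L ^ n / fact n * s ^ n" by (simp add: power_mult_distrib)
  qed
  then have "a (Suc n) t \<le> L * (K * L ^ n / fact n * (t ^ Suc n / real (Suc n)))"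
    using aS[OF Suc.prems] L by (smt (verit) mult_left_mono)
  also have "\<dots> = K * (L * t) ^ Suc n / fact (Suc n)"
    by (simp add: power_mult_distrib field_simps)
  finally show ?case .
qed


locale setting2 = setting + fixes x0 y0 :: nat assumes x0M: "x0 \<le> M"
begin

definition Lam :: "real \<Rightarrow> real" where
  "Lam T = (SOME B. 0 \<le> B \<and> (\<forall>s\<in>{0..T}. \<forall>x\<le>M. \<bar>lam s x\<bar> \<le> B))"

lemma Lam: "0 \<le> Lam T" "s \<in> {0..T} \<Longrightarrow> x \<le> M \<Longrightarrow> \<bar>lam s x\<bar> \<le> Lam T"
proof -
  have "\<exists>B. 0 \<le> B \<and> (\<forall>s\<in>{0..T}. \<forall>x\<le>M. \<bar>lam s x\<bar> \<le> B)" using lam_bound_T by blast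
  from someI_ex[OF this] show "0 \<le> Lam T" "s \<in> {0..T} \<Longrightarrow> x \<le> M \<Longrightarrow> \<bar>lam s x\<bar> \<le> Lam T"
    unfolding Lam_def by auto
qed

definition LL :: "real \<Rightarrow> real" where "LL T = Lc (Lam T)"

lemma LL_nonneg: "0 \<le> LL T"
  unfolding LL_def Lc_def using Lam(1)[of T] Bm_nonneg fu_pos KR_pos by simp

abbreviation Q0 where "Q0 \<equiv> P0 x0 y0"

lemma SF_P0: "SF Q0"
  unfolding summable_family_def P0_def by (auto intro: summable_finite[of "{y0}"])

lemma P0_sum: "(\<Sum>j. \<bar>Q0 i j\<bar>) = (if i = x0 then 1 else 0)"
proof -
  have "(\<lambda>j. \<bar>Q0 i j\<bar>) = (\<lambda>j. if j = y0 then (if i = x0 then 1 else 0) else 0)"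
    unfolding P0_def by auto
  then show ?thesis using sums_single[of y0 "\<lambda>_. if i = x0 then 1 else (0::real)"] by (simp add: sums_iff)
qed

lemma N_P0: "N Q0 = 1"
  unfolding l1norm_def P0_sum using x0M by simp

lemma P0_supp: "M < i \<Longrightarrow> Q0 i j = 0" unfolding P0_def using x0M by auto

definition Step :: "(real \<Rightarrow> family) \<Rightarrow> real \<Rightarrow> family" where
  "Step x t = (\<lambda>i j. if i \<le> M then Q0 i j + integral {0..t} (\<lambda>s. Psi M lam f mu s (pos_part (x s)) i j) else 0)"

definition Pic :: "nat \<Rightarrow> real \<Rightarrow> family" where
  "Pic n = (Step ^^ n) (\<lambda>t. Q0)"

abbreviation Ps where "Ps x i j s \<equiv> Psi M lam f mu s (pos_part (x s)) i j"

lemma int_lip: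
  assumes cx: "ncont x" and cy: "ncont y" and sx: "\<And>s. 0 \<le> s \<Longrightarrow> SF (x s)" and sy: "\<And>s. 0 \<le> s \<Longrightarrow> SF (y s)"
    and ab: "0 \<le> a" "a \<le> b" "b \<le> T"
  shows "(\<Sum>i\<le>M. \<Sum>j<J. \<bar>integral {a..b} (Ps x i j) - integral {a..b} (Ps y i j)\<bar>)
          \<le> integral {a..b} (\<lambda>s. LL T * N (\<lambda>i j. x s i j - y s i j))"
proof (rule SI)
  have sub: "{a..b} \<subseteq> {0..b}" using ab by auto
  fix i j assume i: "i \<le> M"
  have ix: "Ps x i j integrable_on {a..b}"
    by (rule integrable_subinterval_real[OF Psi_integrable[OF cx sx i] sub])
  have iy: "Ps y i j integrable_on {a..b}"
    by (rule integrable_subinterval_real[OF Psi_integrable[OF cy sy i] sub])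
  show "((\<lambda>s. Ps x i j s - Ps y i j s) has_integral (integral {a..b} (Ps x i j) - integral {a..b} (Ps y i j))) {a..b}"
    by (intro has_integral_diff integrable_integral ix iy)
next
  have "continuous_on {a..b} (\<lambda>s. LL T * N (\<lambda>i j. x s i j - y s i j))"
    by (intro continuous_intros continuous_on_subset[OF N_cont[OF cx cy sx sy]]) (use ab in auto)
  then show "(\<lambda>s. LL T * N (\<lambda>i j. x s i j - y s i j)) integrable_on {a..b}"
    by (rule integrable_continuous_real)
next
  fix s J assume s: "s \<in> {a..b}"
  then have s0: "0 \<le> s" using ab by auto
  show "(\<Sum>i\<le>M. \<Sum>j<J. \<bar>Ps x i j s - Ps y i j s\<bar>) \<le> LL T * N (\<lambda>i j. x s i j - y s i j)"
    unfolding LL_def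
    by (rule Psi_lip[OF sx[OF s0] sy[OF s0]]) (rule Lam(2), use s ab in auto)
qed

lemma good_ncont: "good x \<Longrightarrow> ncont x" and good_SF: "good x \<Longrightarrow> 0 \<le> s \<Longrightarrow> SF (x s)"
  and good_supp: "good x \<Longrightarrow> 0 \<le> s \<Longrightarrow> M < i \<Longrightarrow> x s i j = 0"
  unfolding good_def by auto

lemma good_const: "good (\<lambda>t. Q0)"
  unfolding good_def ncont_def l1norm_def using SF_P0 P0_supp by auto

lemma int_bound:
  assumes gx: "good x" and ab: "0 \<le> a" "a \<le> b" "b \<le> T"
  shows "(\<Sum>i\<le>M. \<Sum>j<J. \<bar>integral {a..b} (Ps x i j)\<bar>) \<le> integral {a..b} (\<lambda>s. LL T * N (x s))"
proof -
  have z: "Ps (\<lambda>s i j. 0) i j s = 0" for s i j using Psi_zero by simp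
  show ?thesis
    using int_lip[OF good_ncont[OF gx] ncont_zero good_SF[OF gx] SF_zero ab, of J] unfolding z by simp
qed

lemma Step_diff_int:
  assumes gx: "good x" and ab: "0 \<le> a" "a \<le> b" and i: "i \<le> M"
  shows "Step x b i j - Step x a i j = integral {a..b} (Ps x i j)"
proof -
  have "integral {0..a} (Ps x i j) + integral {a..b} (Ps x i j) = integral {0..b} (Ps x i j)"
    by (rule Henstock_Kurzweil_Integration.integral_combine[OF ab Psi_integrable[OF good_ncont[OF gx] good_SF[OF gx] i]])
  then show ?thesis unfolding Step_def using i by simp
qed

lemma Step_incr:
  assumes gx: "good x" and ab: "0 \<le> a" "a \<le> b" "b \<le> T"
  shows "N (\<lambda>i j. Step x b i j - Step x a i j) \<le> integral {a..b} (\<lambda>s. LL T * N (x s))"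
    "SF (\<lambda>i j. Step x b i j - Step x a i j)"
proof -
  have b: "(\<Sum>i\<le>M. \<Sum>j<J. \<bar>Step x b i j - Step x a i j\<bar>) \<le> integral {a..b} (\<lambda>s. LL T * N (x s))" for J
    using int_bound[OF gx ab, of J] Step_diff_int[OF gx ab(1,2)] by simp
  show "N (\<lambda>i j. Step x b i j - Step x a i j) \<le> integral {a..b} (\<lambda>s. LL T * N (x s))"
    by (rule PS(2)[OF b])
  show "SF (\<lambda>i j. Step x b i j - Step x a i j)" by (rule PS(1)[OF b])
qed

lemma ncontI:
  assumes sz: "\<And>s. 0 \<le> s \<Longrightarrow> SF (z s)"
  and "\<And>t. 0 \<le> t \<Longrightarrow> \<exists>H. continuous_on {0..t+1} H \<and> (\<forall>s\<in>{0..t+1}. N (\<lambda>i j. z s i j - z t i j) \<le> \<bar>H s - H t\<bar>)"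
  shows "ncont z"
  unfolding ncont_def
proof (intro allI impI)
  fix t :: real assume t: "0 \<le> t"
  obtain H where H: "continuous_on {0..t+1} H" "\<And>s. s \<in> {0..t+1} \<Longrightarrow> N (\<lambda>i j. z s i j - z t i j) \<le> \<bar>H s - H t\<bar>"
    using assms(2)[OF t] by blast
  define c where "c s = min (t+1) (max 0 s)" for s :: real
  have cc: "continuous_on UNIV c" unfolding c_def by (intro continuous_intros)
  have cH: "continuous_on UNIV (\<lambda>s. H (c s))"
    by (rule continuous_on_compose2[OF H(1) cc]) (use t in \<open>auto simp: c_def\<close>)
  have ct: "c t = t" using t by (simp add: c_def)
  have "((\<lambda>s. \<bar>H (c s) - H t\<bar>) \<longlongrightarrow> \<bar>H (c t) - H t\<bar>) (at t within {0..})"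
  proof -
    have "((\<lambda>s. H (c s)) \<longlongrightarrow> H (c t)) (at t within UNIV)" using cH unfolding continuous_on_def by blast
    then have "((\<lambda>s. H (c s)) \<longlongrightarrow> H (c t)) (at t within {0..})" by (rule tendsto_within_subset) auto
    then show ?thesis by (intro tendsto_intros)
  qed
  then have l: "((\<lambda>s. \<bar>H (c s) - H t\<bar>) \<longlongrightarrow> 0) (at t within {0..})" using ct by simp
  have ev: "eventually (\<lambda>s. norm (N (\<lambda>i j. z s i j - z t i j)) \<le> \<bar>H (c s) - H t\<bar>) (at t within {0..})"
    unfolding eventually_at
  proof (intro exI[of _ 1] conjI ballI impI)
    fix s :: real assume s: "s \<in> {0..}" "s \<noteq> t \<and> dist s t < 1"
    then have s1: "s \<in> {0..t+1}" using t by (auto simp: dist_real_def)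
    then have cs: "c s = s" by (simp add: c_def)
    have "0 \<le> N (\<lambda>i j. z s i j - z t i j)" using sz s t by (intro N_nonneg SF_diff) auto
    then show "norm (N (\<lambda>i j. z s i j - z t i j)) \<le> \<bar>H (c s) - H t\<bar>" using H(2)[OF s1] cs by simp
  qed simp
  show "((\<lambda>s. N (\<lambda>i j. z s i j - z t i j)) \<longlongrightarrow> 0) (at t within {0..})"
    by (rule Lim_null_comparison[OF ev l])
qed

end


context setting2 begin

lemma Step0: "Step x 0 = Q0"
  unfolding Step_def using P0_supp by (auto simp: fun_eq_iff)

lemma Step_supp: "M < i \<Longrightarrow> Step x t i j = 0" unfolding Step_def by simp

lemma Step_SF:
  assumes gx: "good x" and t: "0 \<le> t" shows "SF (Step x t)"
proof -
  have d: "SF (\<lambda>i j. Step x t i j - Step x 0 i j)" by (rule Step_incr(2)[OF gx order_refl t order_refl])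
  show ?thesis by (rule N_comb(1)[OF SF_P0 d]) (simp add: Step0)
qed

lemma Step_good:
  assumes gx: "good x" shows "good (Step x)"
  unfolding good_def
proof (intro conjI allI impI)
  show "Step x t i j = 0" if "M < i" for t i j using that by (rule Step_supp)
  show "SF (Step x t)" if "0 \<le> t" for t by (rule Step_SF[OF gx that])
  show "ncont (Step x)"
  proof (rule ncontI)
    show "SF (Step x s)" if "0 \<le> s" for s by (rule Step_SF[OF gx that])
    fix t :: real assume t: "0 \<le> t"
    define T where "T = t + 1"
    define h where "h s = LL T * N (x s)" for s
    have hc: "continuous_on {0..} h" unfolding h_def
      by (intro continuous_intros N_cont1[OF good_ncont[OF gx] good_SF[OF gx]])
    have hi: "h integrable_on {0..u}" for u
      by (rule integrable_continuous_real, rule continuous_on_subset[OF hc]) auto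
    define H where "H u = integral {0..u} h" for u
    have Hc: "continuous_on {0..T} H" unfolding H_def by (rule indefinite_integral_continuous_1[OF hi])
    have comb: "integral {a..b} h = H b - H a" if "0 \<le> a" "a \<le> b" for a b
      using Henstock_Kurzweil_Integration.integral_combine[OF that hi[of b]] unfolding H_def by simp
    have "N (\<lambda>i j. Step x s i j - Step x t i j) \<le> \<bar>H s - H t\<bar>" if s: "s \<in> {0..T}" for s
    proof (cases "t \<le> s")
      case True
      have "N (\<lambda>i j. Step x s i j - Step x t i j) \<le> integral {t..s} h"
        unfolding h_def by (rule Step_incr(1)[OF gx t True]) (use s in auto)
      then show ?thesis using comb[OF t True] by simp
    next
      case False
      then have ts: "s \<le> t" by simp
      have "N (\<lambda>i j. Step x t i j - Step x s i j) \<le> integral {s..t} h"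
        unfolding h_def by (rule Step_incr(1)[OF gx _ ts]) (use s T_def in auto)
      moreover have "N (\<lambda>i j. Step x s i j - Step x t i j) = N (\<lambda>i j. Step x t i j - Step x s i j)"
        by (rule N_sym[OF Step_SF[OF gx] Step_SF[OF gx]]) (use s t in auto)
      ultimately show ?thesis using comb[of s t] s ts by simp
    qed
    then show "\<exists>H. continuous_on {0..t + 1} H \<and> (\<forall>s\<in>{0..t + 1}. N (\<lambda>i j. Step x s i j - Step x t i j) \<le> \<bar>H s - H t\<bar>)"
      using Hc unfolding T_def by blast
  qed
qed

lemma Step_lip:
  assumes gx: "good x" and gy: "good y" and tT: "0 \<le> t" "t \<le> T"
  shows "N (\<lambda>i j. Step x t i j - Step y t i j) \<le> integral {0..t} (\<lambda>s. LL T * N (\<lambda>i j. x s i j - y s i j))"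
proof (rule PS(2))
  fix J
  show "(\<Sum>i\<le>M. \<Sum>j<J. \<bar>Step x t i j - Step y t i j\<bar>) \<le> integral {0..t} (\<lambda>s. LL T * N (\<lambda>i j. x s i j - y s i j))"
    using int_lip[OF good_ncont[OF gx] good_ncont[OF gy] good_SF[OF gx] good_SF[OF gy] order_refl tT, of J]
    by (simp add: Step_def)
qed

lemma Pic_Suc: "Pic (Suc n) = Step (Pic n)" unfolding Pic_def by simp
lemma Pic_0: "Pic 0 = (\<lambda>t. Q0)" unfolding Pic_def by simp

lemma Pic_good: "good (Pic n)"
  by (induction n) (auto simp: Pic_Suc Pic_0 good_const Step_good)

end


context setting2 begin

definition dd :: "nat \<Rightarrow> real \<Rightarrow> real" where
  "dd n t = N (\<lambda>i j. Pic (Suc n) t i j - Pic n t i j)"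

definition ee :: "real \<Rightarrow> nat \<Rightarrow> real" where
  "ee T n = LL T * T * (LL T * T) ^ n / fact n"

lemma dd_bound:
  assumes t: "t \<in> {0..T}" shows "dd n t \<le> LL T * T * (LL T * t) ^ n / fact n"
proof (rule gron[OF LL_nonneg _ _ _ _ t])
  show "0 \<le> LL T * T" using t LL_nonneg[of T] by simp
next
  fix t assume t: "t \<in> {0..T}"
  have "dd 0 t = N (\<lambda>i j. Step (\<lambda>t. Q0) t i j - Step (\<lambda>t. Q0) 0 i j)"
    unfolding dd_def Pic_Suc Pic_0 Step0 by simp
  also have "\<dots> \<le> integral {0..t} (\<lambda>s. LL T * N Q0)"
    by (rule Step_incr(1)[OF good_const]) (use t in auto)
  also have "\<dots> = LL T * t" using t by (simp add: N_P0)
  also have "\<dots> \<le> LL T * T" using t LL_nonneg[of T] by (simp add: mult_left_mono)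
  finally show "dd 0 t \<le> LL T * T" .
next
  fix n t assume t: "t \<in> {0..T}"
  have "dd (Suc n) t \<le> integral {0..t} (\<lambda>s. LL T * N (\<lambda>i j. Pic (Suc n) s i j - Pic n s i j))"
    unfolding dd_def Pic_Suc[of "Suc n"] Pic_Suc[of n]
    by (rule Step_lip[OF Step_good[OF Pic_good] Pic_good]) (use t in \<open>auto simp: Pic_Suc\<close>)
  also have "\<dots> = LL T * integral {0..t} (dd n)" unfolding dd_def by simp
  finally show "dd (Suc n) t \<le> LL T * integral {0..t} (dd n)" .
next
  fix n
  show "continuous_on {0..T} (dd n)" unfolding dd_def
    by (rule continuous_on_subset[OF N_cont[OF good_ncont good_ncont good_SF good_SF]]) (auto intro: Pic_good)
qed

lemma ee_summable: "summable (ee T)"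
proof -
  have "summable (\<lambda>n. LL T * T * (inverse (fact n) * (LL T * T) ^ n))"
    by (intro summable_mult summable_exp)
  then show ?thesis unfolding ee_def by (simp add: field_simps)
qed

lemma dd_le_ee:
  assumes t: "t \<in> {0..T}" shows "dd n t \<le> ee T n"
proof -
  have "(LL T * t) ^ n \<le> (LL T * T) ^ n"
    using t LL_nonneg[of T] by (intro power_mono mult_left_mono) auto
  then have "LL T * T * (LL T * t) ^ n / fact n \<le> ee T n"
    unfolding ee_def using t LL_nonneg[of T] by (intro divide_right_mono mult_left_mono) auto
  with dd_bound[OF t, of n] show ?thesis by linarith
qed

lemma single_le: fixes u :: family shows "i \<le> M \<Longrightarrow> \<bar>u i j\<bar> \<le> (\<Sum>i\<le>M. \<Sum>j'<Suc j. \<bar>u i j'\<bar>)"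
proof -
  assume i: "i \<le> M"
  have "\<bar>u i j\<bar> \<le> (\<Sum>j'<Suc j. \<bar>u i j'\<bar>)" by (intro member_le_sum) auto
  also have "\<dots> \<le> (\<Sum>i\<le>M. \<Sum>j'<Suc j. \<bar>u i j'\<bar>)" using i by (intro member_le_sum) (auto intro: sum_nonneg)
  finally show ?thesis .
qed

lemma Pic_supp: "M < i \<Longrightarrow> Pic n t i j = 0"
  by (cases n) (auto simp: Pic_0 Pic_Suc P0_supp Step_supp)

abbreviation df where "df n t i j \<equiv> Pic (Suc n) t i j - Pic n t i j"

lemma df_le: assumes t: "t \<in> {0..T}" shows "\<bar>df n t i j\<bar> \<le> ee T n"
proof (cases "i \<le> M")
  case True
  have "\<bar>df n t i j\<bar> \<le> dd n t" unfolding dd_def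
    by (rule comp_le[OF SF_diff[OF good_SF[OF Pic_good] good_SF[OF Pic_good]] True]) (use t in auto)
  then show ?thesis using dd_le_ee[OF t, of n] by linarith
next
  case False
  have "0 \<le> ee T n" unfolding ee_def using t LL_nonneg[of T] by simp
  then show ?thesis using False by (simp add: Pic_supp)
qed

lemma df_summable: assumes t: "t \<in> {0..T}" shows "summable (\<lambda>n. \<bar>df n t i j\<bar>)"
  by (rule summable_comparison_test'[OF ee_summable]) (use df_le[OF t] in auto)

definition Plim :: "real \<Rightarrow> family" where
  "Plim t = (\<lambda>i j. Q0 i j + (\<Sum>n. df n t i j))"

lemma Pic_tele: "Pic n t i j = Q0 i j + (\<Sum>m<n. df m t i j)"
proof -
  have "(\<Sum>m<n. df m t i j) = Pic n t i j - Pic 0 t i j"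
    by (rule sum_lessThan_telescope[where f = "\<lambda>n. Pic n t i j"])
  then show ?thesis unfolding Pic_0 by simp
qed

lemma Pic_lim: assumes "0 \<le> t" shows "(\<lambda>n. Pic n t i j) \<longlonglongrightarrow> Plim t i j"
proof -
  have tt: "t \<in> {0..t}" using assms by simp
  have s: "summable (\<lambda>n. df n t i j)" by (rule summable_rabs_cancel[OF df_summable[OF tt]])
  have "(\<lambda>n. Q0 i j + (\<Sum>m<n. df m t i j)) \<longlonglongrightarrow> Plim t i j"
    unfolding Plim_def by (intro tendsto_add tendsto_const summable_LIMSEQ s)
  then show ?thesis by (simp only: Pic_tele[symmetric])
qed

definition tail :: "real \<Rightarrow> nat \<Rightarrow> real" where "tail T n = (\<Sum>m. ee T (m + n))"

lemma tail_lim: "tail T \<longlonglongrightarrow> 0"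
  unfolding tail_def by (rule suminf_exist_split2[OF ee_summable])

lemma Plim_Pic:
  assumes t: "t \<in> {0..T}"
  shows "SF (\<lambda>i j. Plim t i j - Pic n t i j)" "N (\<lambda>i j. Plim t i j - Pic n t i j) \<le> tail T n"
proof -
  have sa: "summable (\<lambda>m. \<bar>df (m + n) t i j\<bar>)" for i j
    using df_summable[OF t, of i j] by (rule summable_ignore_initial_segment)
  have eq: "Plim t i j - Pic n t i j = (\<Sum>m. df (m + n) t i j)" for i j
  proof -
    have s: "summable (\<lambda>m. df m t i j)" by (rule summable_rabs_cancel[OF df_summable[OF t]])
    have a: "Plim t i j = Q0 i j + (\<Sum>m. df m t i j)" by (simp add: Plim_def)
    have b: "(\<Sum>m. df (m + n) t i j) = (\<Sum>m. df m t i j) - (\<Sum>m<n. df m t i j)"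
      by (rule suminf_minus_initial_segment[OF s])
    show ?thesis using a b Pic_tele[of n t i j] by linarith
  qed
  have b: "(\<Sum>i\<le>M. \<Sum>j<J. \<bar>Plim t i j - Pic n t i j\<bar>) \<le> tail T n" for J
  proof -
    have "(\<Sum>i\<le>M. \<Sum>j<J. \<bar>Plim t i j - Pic n t i j\<bar>) \<le> (\<Sum>i\<le>M. \<Sum>j<J. \<Sum>m. \<bar>df (m + n) t i j\<bar>)"
      unfolding eq by (intro sum_mono summable_rabs sa)
    also have "\<dots> = (\<Sum>m. \<Sum>i\<le>M. \<Sum>j<J. \<bar>df (m + n) t i j\<bar>)"
    proof -
      have "(\<Sum>j<J. \<Sum>m. \<bar>df (m + n) t i j\<bar>) = (\<Sum>m. \<Sum>j<J. \<bar>df (m + n) t i j\<bar>)" for i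
        by (rule suminf_sum[symmetric]) (rule sa)
      then have "(\<Sum>i\<le>M. \<Sum>j<J. \<Sum>m. \<bar>df (m + n) t i j\<bar>) = (\<Sum>i\<le>M. \<Sum>m. \<Sum>j<J. \<bar>df (m + n) t i j\<bar>)" by simp
      also have "\<dots> = (\<Sum>m. \<Sum>i\<le>M. \<Sum>j<J. \<bar>df (m + n) t i j\<bar>)"
        by (rule suminf_sum[symmetric]) (intro summable_sum sa)
      finally show ?thesis .
    qed
    also have "\<dots> \<le> (\<Sum>m. ee T (m + n))"
    proof (rule suminf_le)
      fix m
      have "(\<Sum>i\<le>M. \<Sum>j<J. \<bar>df (m + n) t i j\<bar>) \<le> dd (m + n) t" unfolding dd_def
        by (rule N_partial[OF SF_diff[OF good_SF[OF Pic_good] good_SF[OF Pic_good]]]) (use t in auto)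
      then show "(\<Sum>i\<le>M. \<Sum>j<J. \<bar>df (m + n) t i j\<bar>) \<le> ee T (m + n)" using dd_le_ee[OF t, of "m + n"] by linarith
    next
      show "summable (\<lambda>m. \<Sum>i\<le>M. \<Sum>j<J. \<bar>df (m + n) t i j\<bar>)" by (intro summable_sum sa)
      show "summable (\<lambda>m. ee T (m + n))" by (rule summable_ignore_initial_segment[OF ee_summable])
    qed
    finally show ?thesis unfolding tail_def .
  qed
  show "SF (\<lambda>i j. Plim t i j - Pic n t i j)" "N (\<lambda>i j. Plim t i j - Pic n t i j) \<le> tail T n"
    using PS[OF b] by auto
qed

end


context setting2 begin

lemma Plim_supp: "M < i \<Longrightarrow> Plim t i j = 0"
  unfolding Plim_def by (simp add: P0_supp Pic_supp)

lemma Plim_SF: assumes "0 \<le> t" shows "SF (Plim t)"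
proof -
  have tt: "t \<in> {0..t}" using assms by simp
  show ?thesis
    by (rule N_comb(1)[OF good_SF[OF Pic_good assms, of 0] Plim_Pic(1)[OF tt, of 0]]) simp
qed

lemma Plim_ncont: "ncont Plim"
  unfolding ncont_def
proof (intro allI impI)
  fix t :: real assume t: "0 \<le> t"
  define T where "T = t + 1"
  show "((\<lambda>s. N (\<lambda>i j. Plim s i j - Plim t i j)) \<longlongrightarrow> 0) (at t within {0..})"
    unfolding tendsto_iff
  proof (intro allI impI)
    fix e :: real assume e: "0 < e"
    have "eventually (\<lambda>n. tail T n < e / 4) sequentially"
      using order_tendstoD(2)[OF tail_lim, of "e/4"] e by simp
    then obtain n where n: "tail T n < e / 4" unfolding eventually_sequentially by auto
    have ev1: "eventually (\<lambda>s. N (\<lambda>i j. Pic n s i j - Pic n t i j) < e / 2) (at t within {0..})"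
      using order_tendstoD(2)[OF good_ncont[OF Pic_good, unfolded ncont_def, rule_format, OF t], of "e/2"] e by simp
    have ev2: "eventually (\<lambda>s. s \<in> {0..T}) (at t within {0..})"
      unfolding eventually_at by (intro exI[of _ 1]) (use t in \<open>auto simp: T_def dist_real_def\<close>)
    show "eventually (\<lambda>s. dist (N (\<lambda>i j. Plim s i j - Plim t i j)) 0 < e) (at t within {0..})"
      using ev1 ev2
    proof eventually_elim
      case (elim s)
      have s0: "0 \<le> s" using elim by simp
      have tT: "t \<in> {0..T}" using t by (simp add: T_def)
      have sP: "SF (Plim s)" "SF (Plim t)" "SF (Pic n s)" "SF (Pic n t)"
        using Plim_SF good_SF[OF Pic_good] s0 t by auto
      have "N (\<lambda>i j. Plim s i j - Plim t i j) \<le> N (\<lambda>i j. Plim s i j - Pic n s i j) + N (\<lambda>i j. Pic n s i j - Plim t i j)"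
        by (rule N_tri[OF sP(1,3,2)])
      also have "N (\<lambda>i j. Pic n s i j - Plim t i j) \<le> N (\<lambda>i j. Pic n s i j - Pic n t i j) + N (\<lambda>i j. Pic n t i j - Plim t i j)"
        by (rule N_tri[OF sP(3,4,2)])
      also have "N (\<lambda>i j. Pic n t i j - Plim t i j) = N (\<lambda>i j. Plim t i j - Pic n t i j)"
        by (rule N_sym[OF sP(4,2)])
      finally have le: "N (\<lambda>i j. Plim s i j - Plim t i j) \<le> N (\<lambda>i j. Plim s i j - Pic n s i j) + (N (\<lambda>i j. Pic n s i j - Pic n t i j) + N (\<lambda>i j. Plim t i j - Pic n t i j))"
        by simp
      have "N (\<lambda>i j. Plim s i j - Pic n s i j) \<le> tail T n" by (rule Plim_Pic(2)) (use elim in auto)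
      moreover have "N (\<lambda>i j. Plim t i j - Pic n t i j) \<le> tail T n" by (rule Plim_Pic(2)[OF tT])
      moreover have "0 \<le> N (\<lambda>i j. Plim s i j - Plim t i j)" by (intro N_nonneg SF_diff sP)
      ultimately show ?case using le n elim by (simp add: dist_real_def)
    qed
  qed
qed

lemma Plim_good: "good Plim"
  unfolding good_def using Plim_supp Plim_SF Plim_ncont by auto

lemma Plim_int:
  assumes t: "0 \<le> t" and i: "i \<le> M"
  shows "(Ps Plim i j has_integral (Plim t i j - Q0 i j)) {0..t}"
proof -
  define I where "I n = integral {0..t} (Ps (Pic n) i j)" for n
  have tt: "t \<in> {0..t}" using t by simp
  have PS: "Pic (Suc n) t i j = Q0 i j + I n" for n unfolding Pic_Suc Step_def I_def using i by simp
  have b: "\<bar>I n - integral {0..t} (Ps Plim i j)\<bar> \<le> LL t * t * tail t n" for n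
  proof -
    have "\<bar>I n - integral {0..t} (Ps Plim i j)\<bar>
      \<le> (\<Sum>i\<le>M. \<Sum>j'<Suc j. \<bar>integral {0..t} (Ps (Pic n) i j') - integral {0..t} (Ps Plim i j')\<bar>)"
      unfolding I_def using single_le[OF i, of "\<lambda>i j. integral {0..t} (Ps (Pic n) i j) - integral {0..t} (Ps Plim i j)" j] by simp
    also have "\<dots> \<le> integral {0..t} (\<lambda>s. LL t * N (\<lambda>i j. Pic n s i j - Plim s i j))"
      by (rule int_lip[OF good_ncont[OF Pic_good] Plim_ncont good_SF[OF Pic_good] Plim_SF order_refl t order_refl])
    also have "\<dots> \<le> integral {0..t} (\<lambda>s. LL t * tail t n)"
    proof (rule integral_le)
      show "(\<lambda>s. LL t * N (\<lambda>i j. Pic n s i j - Plim s i j)) integrable_on {0..t}"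
        by (intro integrable_continuous_real continuous_intros continuous_on_subset[OF N_cont[OF good_ncont[OF Pic_good] Plim_ncont good_SF[OF Pic_good] Plim_SF]]) auto
      show "(\<lambda>s. LL t * tail t n) integrable_on {0..t}" by (rule integrable_const_ivl)
      fix s assume s: "s \<in> {0..t}"
      have "N (\<lambda>i j. Pic n s i j - Plim s i j) = N (\<lambda>i j. Plim s i j - Pic n s i j)"
        by (rule N_sym) (use s good_SF[OF Pic_good] Plim_SF in auto)
      also have "\<dots> \<le> tail t n" by (rule Plim_Pic(2)[OF s])
      finally show "LL t * N (\<lambda>i j. Pic n s i j - Plim s i j) \<le> LL t * tail t n"
        by (intro mult_left_mono LL_nonneg)
    qed
    also have "\<dots> = LL t * t * tail t n" using t by (simp add: integral_const_real)
    finally show ?thesis .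
  qed
  have "(\<lambda>n. LL t * t * tail t n) \<longlonglongrightarrow> LL t * t * 0" by (intro tendsto_mult tendsto_const tail_lim)
  then have lt0: "(\<lambda>n. LL t * t * tail t n) \<longlonglongrightarrow> 0" by simp
  have ev: "eventually (\<lambda>n. norm (I n - integral {0..t} (Ps Plim i j)) \<le> LL t * t * tail t n) sequentially"
    using b by (intro always_eventually allI) simp
  have "(\<lambda>n. I n - integral {0..t} (Ps Plim i j)) \<longlonglongrightarrow> 0"
    by (rule Lim_null_comparison[OF ev lt0])
  then have l1: "I \<longlonglongrightarrow> integral {0..t} (Ps Plim i j)" by (simp only: LIM_zero_iff)
  have "(\<lambda>n. Pic (Suc n) t i j) \<longlonglongrightarrow> Plim t i j" by (rule LIMSEQ_Suc[OF Pic_lim[OF t]])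
  then have l2': "(\<lambda>n. Pic (Suc n) t i j - Q0 i j) \<longlonglongrightarrow> Plim t i j - Q0 i j" by (intro tendsto_diff tendsto_const)
  have fe: "(\<lambda>n. Pic (Suc n) t i j - Q0 i j) = I"
  proof
    fix n show "Pic (Suc n) t i j - Q0 i j = I n" using PS[of n] by linarith
  qed
  have l2: "I \<longlonglongrightarrow> Plim t i j - Q0 i j" using l2' unfolding fe .
  have eq: "integral {0..t} (Ps Plim i j) = Plim t i j - Q0 i j" by (rule LIMSEQ_unique[OF l1 l2])
  show ?thesis unfolding eq[symmetric]
    by (rule integrable_integral[OF Psi_integrable[OF Plim_ncont Plim_SF i]])
qed

lemma Plim_solution: "is_solution M lam f mu x0 y0 Plim"
proof -
  have c1: "\<forall>t\<ge>0. \<forall>i j. M < i \<longrightarrow> Plim t i j = 0" using Plim_supp by blast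
  have c2: "\<forall>t\<ge>0. SF (Plim t)" using Plim_SF by blast
  have c3: "\<forall>t\<ge>0. ((\<lambda>s. N (\<lambda>i j. Plim s i j - Plim t i j)) \<longlongrightarrow> 0) (at t within {0..})"
    using Plim_ncont unfolding ncont_def .
  have c4: "\<forall>t\<ge>0. \<forall>i\<le>M. \<forall>j. ((\<lambda>s. Psi M lam f mu s (pos_part (Plim s)) i j) has_integral (Plim t i j - Q0 i j)) {0..t}"
    using Plim_int by blast
  show ?thesis unfolding is_solution_def using c1 c2 c3 c4 by blast
qed

end


lemma conv_abs:
  fixes f :: "nat \<Rightarrow> real"
  assumes "(\<lambda>z. norm (f z)) summable_on UNIV"
  shows "summable f" "suminf f = infsum f UNIV"
proof -
  have "f summable_on UNIV" by (rule Infinite_Sum.abs_summable_summable[OF assms])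
  then have "(f has_sum infsum f UNIV) UNIV" by (rule has_sum_infsum)
  then have "f sums infsum f UNIV" by (rule has_sum_imp_sums)
  then show "summable f" "suminf f = infsum f UNIV" by (auto simp: sums_iff)
qed

lemma abs_conv:
  fixes f :: "nat \<Rightarrow> real"
  assumes "summable (\<lambda>n. \<bar>f n\<bar>)"
  shows "(\<lambda>z. norm (f z)) summable_on UNIV"
  using summable_on_UNIV_nonneg_real_iff[of "\<lambda>n. \<bar>f n\<bar>"] assms by simp

lemma suminf_swap_abs:
  fixes g :: "nat \<Rightarrow> nat \<Rightarrow> real"
  assumes r: "\<And>k. summable (\<lambda>j. \<bar>g k j\<bar>)" and s: "summable (\<lambda>k. \<Sum>j. \<bar>g k j\<bar>)"
  shows "(\<Sum>j. \<Sum>k. g k j) = (\<Sum>k. \<Sum>j. g k j)"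
proof -
  have rowinf: "infsum (\<lambda>j. norm (g k j)) UNIV = (\<Sum>j. \<bar>g k j\<bar>)" for k
    using conv_abs(2)[OF abs_conv[of "\<lambda>j. \<bar>g k j\<bar>"]] r[of k] by simp
  have A: "(\<lambda>z. norm ((\<lambda>(k, j). g k j) z)) summable_on (UNIV \<times> UNIV)"
  proof -
    have "(\<lambda>z. norm ((\<lambda>p. g (fst p) (snd p)) z)) summable_on Sigma UNIV (\<lambda>_. UNIV)"
    proof (rule Infinite_Sum.abs_summable_on_Sigma_iff[where f="\<lambda>p. g (fst p) (snd p)" and A=UNIV and B="\<lambda>_. UNIV", THEN iffD2], intro conjI ballI)
      fix k :: nat show "(\<lambda>z. norm ((\<lambda>j. g (fst (k, j)) (snd (k, j))) z)) summable_on UNIV"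
        using abs_conv[OF r[of k]] by simp
    next
      show "(\<lambda>z. norm ((\<lambda>k. \<Sum>\<^sub>\<infinity>j\<in>UNIV. norm (g (fst (k, j)) (snd (k, j)))) z)) summable_on UNIV"
        using abs_conv[of "\<lambda>k. \<Sum>j. \<bar>g k j\<bar>"] s rowinf by (simp add: suminf_nonneg r)
    qed
    then show ?thesis by (simp add: case_prod_beta')
  qed
  have A': "(\<lambda>z. norm ((\<lambda>(j, k). g k j) z)) summable_on (UNIV \<times> UNIV)"
  proof -
    have "(\<lambda>p. norm (case p of (k, j) \<Rightarrow> g k j)) \<circ> prod.swap summable_on (UNIV \<times> UNIV)"
      using A summable_on_reindex[of prod.swap "UNIV \<times> UNIV" "\<lambda>p. norm (case p of (k, j) \<Rightarrow> g k j)"]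
      by (simp add: product_swap)
    then show ?thesis by (simp add: o_def case_prod_beta')
  qed
  have BC: "(\<forall>j\<in>UNIV. (\<lambda>z. norm ((\<lambda>k. (\<lambda>(j, k). g k j) (j, k)) z)) summable_on UNIV) \<and>
       (\<lambda>z. norm ((\<lambda>j. infsum (\<lambda>k. norm ((\<lambda>(j, k). g k j) (j, k))) UNIV) z)) summable_on UNIV"
    using iffD1[OF Infinite_Sum.abs_summable_on_Sigma_iff[where f="\<lambda>(j, k). g k j" and A=UNIV and B="\<lambda>_. UNIV"] A'] .
  have B: "\<forall>j\<in>UNIV. (\<lambda>z. norm ((\<lambda>k. g k j) z)) summable_on UNIV" using BC by simp
  have C: "(\<lambda>z. norm ((\<lambda>j. infsum (\<lambda>k. norm (g k j)) UNIV) z)) summable_on UNIV" using BC by simp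
  have Cj: "(\<lambda>z. norm ((\<lambda>j. infsum (\<lambda>k. g k j) UNIV) z)) summable_on UNIV"
  proof (rule Infinite_Sum.abs_summable_on_comparison_test[OF C])
    fix j :: nat assume "j \<in> UNIV"
    show "norm (infsum (\<lambda>k. g k j) UNIV) \<le> norm (infsum (\<lambda>k. norm (g k j)) UNIV)"
      using norm_infsum_bound[of "\<lambda>k. g k j" UNIV] B by (simp add: infsum_nonneg)
  qed
  have Ck: "(\<lambda>z. norm ((\<lambda>k. infsum (\<lambda>j. g k j) UNIV) z)) summable_on UNIV"
  proof (rule Infinite_Sum.abs_summable_on_comparison_test[of "\<lambda>k. infsum (\<lambda>j. norm (g k j)) UNIV"])
    show "(\<lambda>z. norm ((\<lambda>k. infsum (\<lambda>j. norm (g k j)) UNIV) z)) summable_on UNIV"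
      using abs_conv[of "\<lambda>k. \<Sum>j. \<bar>g k j\<bar>"] s rowinf by (simp add: suminf_nonneg r)
    fix k :: nat assume "k \<in> UNIV"
    show "norm (infsum (\<lambda>j. g k j) UNIV) \<le> norm (infsum (\<lambda>j. norm (g k j)) UNIV)"
      using norm_infsum_bound[of "\<lambda>j. g k j" UNIV] abs_conv[OF r[of k]] by (simp add: infsum_nonneg)
  qed
  have sw: "infsum (\<lambda>k. infsum (\<lambda>j. g k j) UNIV) UNIV = infsum (\<lambda>j. infsum (\<lambda>k. g k j) UNIV) UNIV"
    by (rule infsum_swap_banach) (rule Infinite_Sum.abs_summable_summable[OF A])
  have e1: "(\<Sum>j. g k j) = infsum (\<lambda>j. g k j) UNIV" for k by (rule conv_abs(2)[OF abs_conv[OF r]])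
  have e2: "(\<Sum>k. g k j) = infsum (\<lambda>k. g k j) UNIV" for j using B conv_abs(2)[of "\<lambda>k. g k j"] by simp
  have "(\<Sum>j. \<Sum>k. g k j) = (\<Sum>j. infsum (\<lambda>k. g k j) UNIV)" by (simp add: e2)
  also have "\<dots> = infsum (\<lambda>j. infsum (\<lambda>k. g k j) UNIV) UNIV" by (rule conv_abs(2)[OF Cj])
  also have "\<dots> = infsum (\<lambda>k. infsum (\<lambda>j. g k j) UNIV) UNIV" by (rule sw[symmetric])
  also have "\<dots> = (\<Sum>k. infsum (\<lambda>j. g k j) UNIV)" by (rule conv_abs(2)[OF Ck, symmetric])
  also have "\<dots> = (\<Sum>k. \<Sum>j. g k j)" by (simp add: e1)
  finally show ?thesis .
qed


context setting2 begin

lemma sol_good: "is_solution M lam f mu x0 y0 Q \<Longrightarrow> good Q"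
  unfolding is_solution_def good_def ncont_def by auto

lemma sol_hasint: "is_solution M lam f mu x0 y0 Q \<Longrightarrow> 0 \<le> t \<Longrightarrow> i \<le> M \<Longrightarrow>
    (Ps Q i j has_integral (Q t i j - Q0 i j)) {0..t}"
  unfolding is_solution_def by blast

lemma sol_step:
  assumes sq: "is_solution M lam f mu x0 y0 Q" and t: "0 \<le> t" shows "Step Q t = Q t"
proof (intro ext)
  fix i j
  show "Step Q t i j = Q t i j"
  proof (cases "i \<le> M")
    case True
    then show ?thesis unfolding Step_def using integral_unique[OF sol_hasint[OF sq t True, of j]] by simp
  next
    case False
    then show ?thesis using good_supp[OF sol_good[OF sq] t, of i j] by (simp add: Step_def)
  qed
qed

lemma exp_term_lim: "(\<lambda>n. K * x ^ n / fact n :: real) \<longlonglongrightarrow> 0"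
proof -
  have "(\<lambda>n. inverse (fact n) * x ^ n :: real) \<longlonglongrightarrow> 0" by (rule summable_LIMSEQ_zero[OF summable_exp])
  then have "(\<lambda>n. K * (inverse (fact n) * x ^ n) :: real) \<longlonglongrightarrow> K * 0" by (intro tendsto_mult tendsto_const)
  then show ?thesis by (simp add: field_simps)
qed

lemma unique:
  assumes sq: "is_solution M lam f mu x0 y0 Q" and sr: "is_solution M lam f mu x0 y0 R" and t: "0 \<le> t"
  shows "Q t = R t"
proof -
  have gq: "good Q" and gr: "good R" using sol_good sq sr by auto
  define u where "u s = N (\<lambda>i j. Q s i j - R s i j)" for s
  have uc: "continuous_on {0..t} u" unfolding u_def
    by (rule continuous_on_subset[OF N_cont[OF good_ncont[OF gq] good_ncont[OF gr] good_SF[OF gq] good_SF[OF gr]]]) auto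
  have "compact (u ` {0..t})" by (rule compact_continuous_image[OF uc compact_Icc])
  then have "bounded (u ` {0..t})" by (rule compact_imp_bounded)
  then obtain K where K': "\<forall>x\<in>u ` {0..t}. norm x \<le> K" unfolding bounded_iff by blast
  have K: "\<bar>u s\<bar> \<le> K" if "s \<in> {0..t}" for s using K' that by auto
  have K0: "0 \<le> K" using K[of 0] t by (smt (verit) atLeastAtMost_iff)
  have bnd: "u t \<le> K * (LL t * t) ^ n / fact n" for n
  proof (rule gron[where a = "\<lambda>_. u" and T = t, OF LL_nonneg K0])
    show "u s \<le> K" if "s \<in> {0..t}" for s using K[OF that] by linarith
    show "continuous_on {0..t} u" for n :: nat by (rule uc)
    fix s assume s: "s \<in> {0..t}"
    have "u s = N (\<lambda>i j. Step Q s i j - Step R s i j)" unfolding u_def using s sol_step[OF sq] sol_step[OF sr] by simp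
    also have "\<dots> \<le> integral {0..s} (\<lambda>\<sigma>. LL t * N (\<lambda>i j. Q \<sigma> i j - R \<sigma> i j))"
      by (rule Step_lip[OF gq gr]) (use s in auto)
    also have "\<dots> = LL t * integral {0..s} u" unfolding u_def by simp
    finally show "u s \<le> LL t * integral {0..s} u" .
  qed (use t in auto)
  have "u t \<le> 0"
    by (rule LIMSEQ_le_const[OF exp_term_lim[of K "LL t * t"]]) (use bnd in auto)
  moreover have "0 \<le> u t" unfolding u_def by (intro N_nonneg SF_diff good_SF gq gr t)
  ultimately have u0: "u t = 0" by simp
  show ?thesis
  proof (intro ext)
    fix i j
    show "Q t i j = R t i j"
    proof (cases "i \<le> M")
      case True
      have "\<bar>Q t i j - R t i j\<bar> \<le> u t" unfolding u_def
        using comp_le[OF SF_diff[OF good_SF[OF gq t] good_SF[OF gr t]] True, of j] by simp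
      then show ?thesis using u0 by simp
    next
      case False
      then show ?thesis using good_supp[OF gq t] good_supp[OF gr t] by simp
    qed
  qed
qed

lemma Psi_nonneg:
  assumes sx: "SF x" and s: "0 \<le> s" and i: "i \<le> M" and xn: "x i j \<le> 0"
  shows "0 \<le> Psi M lam f mu s (pos_part x) i j"
proof -
  let ?X = "pos_part x"
  have Xij: "?X i j = 0" using xn by (simp add: pos_part_def)
  have rx: "summable (\<lambda>k. \<bar>x i' k\<bar>)" if "i' \<le> M" for i' using sx that unfolding summable_family_def by auto
  have A: "0 \<le> Amap ?X i j" unfolding Amap_def
  proof (rule suminf_nonneg)
    show "summable (\<lambda>k. mu i k j * ?X i k)" by (rule A_summ(2)[OF i pos_part_summ(2)[of x i, OF rx[OF i]]])
    fix k show "0 \<le> mu i k j * ?X i k"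
    proof (cases "k = j")
      case True then show ?thesis using Xij by simp
    next
      case False then show ?thesis using mu_offdiag i pos_part_nonneg[of x i k] by simp
    qed
  qed
  have R1: "0 \<le> Rm ?X i' j" if "i' \<le> M" for i'
    unfolding Rm_def using f_pos[of "real j"] pos_part_nonneg[of x i' j]
      rho_bounds(1)[OF pos_part_summ(1)[of x i', OF rx[OF that]] pos_part_nonneg] by simp
  have R2: "Rm ?X i j = 0" unfolding Rm_def Xij by simp
  have L1: "0 \<le> lam s (i - 1)" using lam_nonneg s i by simp
  show ?thesis unfolding Psi_decomp using A R1[of "i - 1"] R2 L1 i by simp
qed

lemma sol_nonneg:
  assumes sp: "is_solution M lam f mu x0 y0 P" and t1: "0 \<le> t1"
  shows "0 \<le> P t1 i j"
proof (cases "i \<le> M")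
  case False then show ?thesis using good_supp[OF sol_good[OF sp] t1] by simp
next
  case i: True
  have gp: "good P" by (rule sol_good[OF sp])
  show ?thesis
  proof (rule ccontr)
    assume neg: "\<not> 0 \<le> P t1 i j"
    define g where "g s = P s i j" for s
    have gc: "continuous_on {0..} g" unfolding g_def
    proof (rule cont1[OF good_ncont[OF gp], of 1])
      fix s t :: real assume "0 \<le> s" "0 \<le> t"
      then show "\<bar>P s i j - P t i j\<bar> \<le> 1 * N (\<lambda>i j. P s i j - P t i j)"
        using comp_le[OF SF_diff[OF good_SF[OF gp] good_SF[OF gp]] i, of s t j] by simp
    qed simp
    have g0: "g 0 = Q0 i j"
      using integral_unique[OF sol_hasint[OF sp order_refl i, of j]] by (simp add: g_def)
    have g0n: "0 \<le> g 0" unfolding g0 P0_def by simp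
    define S where "S = {0..t1} \<inter> g -` {0..}"
    have Sc: "closed S" unfolding S_def
      by (rule continuous_closed_preimage[OF continuous_on_subset[OF gc]]) auto
    have S0: "0 \<in> S" unfolding S_def using g0n t1 by auto
    have Sb: "bdd_above S" unfolding S_def by (rule bdd_aboveI[of _ t1]) auto
    define t0 where "t0 = Sup S"
    have t0S: "t0 \<in> S" unfolding t0_def by (rule closed_contains_Sup[OF _ Sb Sc]) (use S0 in auto)
    have t0: "0 \<le> t0" "t0 \<le> t1" "0 \<le> g t0" using t0S unfolding S_def by auto
    have t01: "t0 < t1" using t0 neg by (cases "t0 = t1") (auto simp: g_def)
    have after: "g s < 0" if "s \<in> {t0..t1}" "s \<noteq> t0" for s
    proof (rule ccontr)
      assume "\<not> g s < 0"
      then have "s \<in> S" unfolding S_def using that t0 by auto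
      then have "s \<le> t0" unfolding t0_def by (rule cSup_upper[OF _ Sb])
      then show False using that by auto
    qed
    have int1: "Ps P i j integrable_on {0..t1}" using sol_hasint[OF sp t1 i] by blast
    have "integral {0..t0} (Ps P i j) + integral {t0..t1} (Ps P i j) = integral {0..t1} (Ps P i j)"
      by (rule Henstock_Kurzweil_Integration.integral_combine[OF t0(1,2) int1])
    then have ieq: "integral {t0..t1} (Ps P i j) = g t1 - g t0"
      using integral_unique[OF sol_hasint[OF sp t1 i, of j]] integral_unique[OF sol_hasint[OF sp t0(1) i, of j]]
      by (simp add: g_def)
    have int2: "(Ps P i j has_integral integral {t0..t1} (Ps P i j)) {t0..t1}"
      by (rule integrable_integral[OF integrable_subinterval_real[OF int1]]) (use t0 in auto)
    define h where "h s = (if s = t0 then 0 else Ps P i j s)" for s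
    have int3: "(h has_integral integral {t0..t1} (Ps P i j)) {t0..t1}"
      using has_integral_spike_finite_eq[of "{t0}" "{t0..t1}" "Ps P i j" h] int2 by (simp add: h_def)
    have "0 \<le> integral {t0..t1} (Ps P i j)"
    proof (rule has_integral_nonneg[OF int3])
      fix s assume s: "s \<in> {t0..t1}"
      show "0 \<le> h s"
      proof (cases "s = t0")
        case False
        have "0 \<le> s" using s t0 by auto
        then show ?thesis unfolding h_def using False
          by (simp, intro Psi_nonneg good_SF[OF gp] i) (use after[OF s False] in \<open>auto simp: g_def\<close>)
      qed (simp add: h_def)
    qed
    then show False using ieq t0(3) neg by (simp add: g_def)
  qed
qed

end


context setting2 begin

lemma Amap_sums_zero:
  assumes i: "i \<le> M" and sx: "summable (\<lambda>k. \<bar>X i k\<bar>)"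
  shows "(\<lambda>j. Amap X i j) sums 0"
proof -
  have sa: "summable (\<lambda>j. \<bar>Amap X i j\<bar>)"
  proof (rule summableI_nonneg_bounded)
    fix J show "(\<Sum>j<J. \<bar>Amap X i j\<bar>) \<le> 2 * Bm * (\<Sum>k. \<bar>X i k\<bar>)"
      unfolding Amap_def by (rule A_lin_bound[OF i sx])
  next
    fix n show "0 \<le> \<bar>Amap X i n\<bar>" by (rule abs_ge_zero)
  qed
  have r: "summable (\<lambda>j. \<bar>mu i k j * X i k\<bar>)" for k
  proof -
    have "summable (\<lambda>j. \<bar>mu i k j\<bar> * \<bar>X i k\<bar>)" by (rule summable_mult2[OF row_abs(1)[OF i]])
    then show ?thesis by (simp only: abs_mult)
  qed
  have rs: "(\<Sum>j. \<bar>mu i k j * X i k\<bar>) = (- 2 * mu i k k) * \<bar>X i k\<bar>" for k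
  proof -
    have "(\<Sum>j. \<bar>mu i k j\<bar> * \<bar>X i k\<bar>) = (\<Sum>j. \<bar>mu i k j\<bar>) * \<bar>X i k\<bar>"
      by (rule suminf_mult2[OF row_abs(1)[OF i], symmetric])
    then show ?thesis unfolding row_abs(2)[OF i] by (simp only: abs_mult)
  qed
  have s: "summable (\<lambda>k. \<Sum>j. \<bar>mu i k j * X i k\<bar>)"
  proof (rule summable_comparison_test'[OF summable_mult[OF sx, of "2 * Bm"]])
    fix k
    have m0: "0 \<le> - 2 * mu i k k" using mu_diag i by simp
    have "(- 2 * mu i k k) * \<bar>X i k\<bar> \<le> (2 * Bm) * \<bar>X i k\<bar>"
      using mu_bdd[OF i, of k] by (intro mult_right_mono) auto
    moreover have "norm ((- 2 * mu i k k) * \<bar>X i k\<bar>) = (- 2 * mu i k k) * \<bar>X i k\<bar>"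
      unfolding real_norm_def by (rule abs_of_nonneg[OF mult_nonneg_nonneg[OF m0 abs_ge_zero]])
    ultimately show "norm (\<Sum>j. \<bar>mu i k j * X i k\<bar>) \<le> 2 * Bm * \<bar>X i k\<bar>" unfolding rs by linarith
  qed
  have "(\<Sum>j. Amap X i j) = (\<Sum>j. \<Sum>k. mu i k j * X i k)" unfolding Amap_def by (rule refl)
  also have "\<dots> = (\<Sum>k. \<Sum>j. mu i k j * X i k)" by (rule suminf_swap_abs[OF r s])
  also have "\<dots> = (\<Sum>k. 0)"
  proof -
    have "(\<Sum>j. mu i k j * X i k) = 0" for k
    proof -
      have "(\<Sum>j. mu i k j * X i k) = (\<Sum>j. mu i k j) * X i k"
        by (rule suminf_mult2[symmetric]) (use mu_rows i in blast)
      also have "\<dots> = 0" using mu_rows i by simp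
      finally show ?thesis .
    qed
    then show ?thesis by simp
  qed
  finally have "(\<Sum>j. Amap X i j) = 0" by simp
  moreover have "summable (\<lambda>j. Amap X i j)" by (rule summable_rabs_cancel[OF sa])
  ultimately show ?thesis by (simp add: sums_iff)
qed

lemma Rm_sums:
  assumes sx: "summable x" and x0: "\<And>l. 0 \<le> x l"
  shows "(\<lambda>j. f (real j) * (x j * rho x)) sums Ssum x"
proof -
  have "(\<lambda>j. f (real j) * x j) sums Fsum x"
    unfolding Fsum_def by (rule summable_sums[OF fx_summable]) (use sx x0 in simp)
  then have "(\<lambda>j. rho x * (f (real j) * x j)) sums (rho x * Fsum x)" by (rule sums_mult)
  moreover have "rho x * Fsum x = Ssum x"
  proof (cases "Fsum x = 0")
    case True
    then have "fl * Ssum x \<le> 0" using sums_bounds(1)[OF sx x0] by simp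
    then have "Ssum x \<le> 0" using fl_pos by (simp add: mult_le_0_iff)
    then have "Ssum x = 0" using sums_bounds(3)[OF sx x0] by simp
    then show ?thesis using True by simp
  next
    case False then show ?thesis unfolding rho_def by simp
  qed
  ultimately show ?thesis by (simp add: algebra_simps)
qed

lemma Psi_row_sums:
  assumes sx: "SF x" and i: "i \<le> M"
  shows "(\<lambda>j. Psi M lam f mu s (pos_part x) i j) sums
     ((if 1 \<le> i then lam s (i - 1) * Ssum (pos_part x (i - 1)) else 0) - (if i \<le> M - 1 then lam s i * Ssum (pos_part x i) else 0))"
proof -
  let ?X = "pos_part x"
  have rx: "summable (\<lambda>k. \<bar>x i' k\<bar>)" if "i' \<le> M" for i' using sx that unfolding summable_family_def by auto
  have A: "(\<lambda>j. Amap ?X i j) sums 0" by (rule Amap_sums_zero[of i "pos_part x", OF i pos_part_summ(2)[of x i, OF rx[OF i]]])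
  have R: "(\<lambda>j. Rm ?X i' j) sums Ssum (?X i')" if "i' \<le> M" for i'
    unfolding Rm_def by (rule Rm_sums[OF pos_part_summ(1)[of x i', OF rx[OF that]] pos_part_nonneg])
  have B: "(\<lambda>j. if 1 \<le> i then lam s (i - 1) * Rm ?X (i - 1) j else 0) sums (if 1 \<le> i then lam s (i - 1) * Ssum (?X (i - 1)) else 0)"
    by (cases "1 \<le> i") (use sums_mult[OF R[of "i - 1"]] i in auto)
  have C: "(\<lambda>j. if i \<le> M - 1 then lam s i * Rm ?X i j else 0) sums (if i \<le> M - 1 then lam s i * Ssum (?X i) else 0)"
    by (cases "i \<le> M - 1") (use sums_mult[OF R[of i]] i in auto)
  show ?thesis unfolding Psi_decomp using sums_diff[OF sums_add[OF A B] C] by simp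
qed

lemma Psi_sum_zero:
  assumes sx: "SF x"
  shows "(\<lambda>J. \<Sum>i\<le>M. \<Sum>j<J. Psi M lam f mu s (pos_part x) i j) \<longlonglongrightarrow> 0"
proof -
  define a where "a i = lam s i * Ssum (pos_part x i)" for i
  define c where "c i = (if 1 \<le> i then a (i - 1) else 0) - (if i \<le> M - 1 then a i else 0)" for i
  have "(\<lambda>J. \<Sum>i\<le>M. \<Sum>j<J. Psi M lam f mu s (pos_part x) i j) \<longlonglongrightarrow> (\<Sum>i\<le>M. c i)"
  proof (rule tendsto_sum)
    fix i assume "i \<in> {..M}"
    then have "(\<lambda>j. Psi M lam f mu s (pos_part x) i j) sums c i"
      using Psi_row_sums[OF sx, of i s] unfolding c_def a_def by simp
    then show "(\<lambda>J. \<Sum>j<J. Psi M lam f mu s (pos_part x) i j) \<longlonglongrightarrow> c i" by (simp add: sums_def)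
  qed
  moreover have "(\<Sum>i\<le>M. c i) = 0"
  proof -
    obtain m where m: "M = Suc m" using M_pos by (cases M) auto
    have e1: "(\<Sum>i\<le>M. (if 1 \<le> i then a (i - 1) else 0)) = (\<Sum>i\<le>m. a i)"
      unfolding m sum.atMost_Suc_shift by simp
    have e2: "(\<Sum>i\<le>M. (if i \<le> M - 1 then a i else 0)) = (\<Sum>i\<le>m. a i)"
      unfolding m sum.atMost_Suc by simp
    show ?thesis unfolding c_def sum_subtractf e1 e2 by simp
  qed
  ultimately show ?thesis by simp
qed

lemma norm_one:
  assumes sp: "is_solution M lam f mu x0 y0 P" and t: "0 \<le> t"
  shows "N (P t) = 1"
proof -
  have gp: "good P" by (rule sol_good[OF sp])
  define SJ where "SJ J s = (\<Sum>i\<le>M. \<Sum>j<J. Ps P i j s)" for J s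
  have hs: "(SJ J has_integral (\<Sum>i\<le>M. \<Sum>j<J. P t i j - Q0 i j)) {0..t}" for J
    unfolding SJ_def by (intro has_integral_sum sol_hasint[OF sp t]) auto
  define h where "h s = LL t * N (P s)" for s
  have hi: "h integrable_on {0..t}" unfolding h_def
    by (intro integrable_continuous_real continuous_intros continuous_on_subset[OF N_cont1[OF good_ncont[OF gp] good_SF[OF gp]]]) auto
  have dc: "(\<lambda>J. integral {0..t} (SJ J)) \<longlonglongrightarrow> integral {0..t} (\<lambda>s. 0)"
  proof (rule dominated_convergence(2)[OF _ hi])
    show "SJ J integrable_on {0..t}" for J using hs by blast
    fix J s assume s: "s \<in> {0..t}"
    have "norm (SJ J s) \<le> (\<Sum>i\<le>M. \<Sum>j<J. \<bar>Ps P i j s\<bar>)" unfolding SJ_def real_norm_def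
      by (rule order_trans[OF sum_abs sum_mono[OF order_trans[OF sum_abs]]]) simp
    also have "\<dots> \<le> h s" unfolding h_def LL_def
      by (rule Psi_bound[OF good_SF[OF gp]]) (use s Lam(2)[of s t] in auto)
    finally show "norm (SJ J s) \<le> h s" .
  next
    fix s assume s: "s \<in> {0..t}"
    show "(\<lambda>J. SJ J s) \<longlonglongrightarrow> 0" unfolding SJ_def by (rule Psi_sum_zero[OF good_SF[OF gp]]) (use s in auto)
  qed
  moreover have "integral {0..t} (SJ J) = (\<Sum>i\<le>M. \<Sum>j<J. P t i j - Q0 i j)" for J
    by (rule integral_unique[OF hs])
  ultimately have l0: "(\<lambda>J. \<Sum>i\<le>M. \<Sum>j<J. P t i j - Q0 i j) \<longlonglongrightarrow> 0" by simp
  have pos: "0 \<le> P t i j" for i j by (rule sol_nonneg[OF sp t])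
  have lP: "(\<lambda>J. \<Sum>i\<le>M. \<Sum>j<J. P t i j) \<longlonglongrightarrow> N (P t)"
    unfolding l1norm_def
  proof (rule tendsto_sum)
    fix i assume "i \<in> {..M}"
    then have "summable (\<lambda>j. \<bar>P t i j\<bar>)" using good_SF[OF gp t] unfolding summable_family_def by auto
    then show "(\<lambda>J. \<Sum>j<J. P t i j) \<longlonglongrightarrow> (\<Sum>j. \<bar>P t i j\<bar>)" using pos by (simp add: summable_LIMSEQ)
  qed
  have lQ: "(\<lambda>J. \<Sum>i\<le>M. \<Sum>j<J. Q0 i j) \<longlonglongrightarrow> N Q0"
    unfolding l1norm_def
  proof (rule tendsto_sum)
    fix i assume "i \<in> {..M}"
    then have "summable (\<lambda>j. \<bar>Q0 i j\<bar>)" using SF_P0 unfolding summable_family_def by auto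
    moreover have "\<bar>Q0 i j\<bar> = Q0 i j" for j by (simp add: P0_def)
    ultimately show "(\<lambda>J. \<Sum>j<J. Q0 i j) \<longlonglongrightarrow> (\<Sum>j. \<bar>Q0 i j\<bar>)" by (simp add: summable_LIMSEQ)
  qed
  have "(\<lambda>J. (\<Sum>i\<le>M. \<Sum>j<J. P t i j) - (\<Sum>i\<le>M. \<Sum>j<J. Q0 i j)) \<longlonglongrightarrow> N (P t) - N Q0"
    by (rule tendsto_diff[OF lP lQ])
  moreover have "(\<lambda>J. (\<Sum>i\<le>M. \<Sum>j<J. P t i j) - (\<Sum>i\<le>M. \<Sum>j<J. Q0 i j)) = (\<lambda>J. \<Sum>i\<le>M. \<Sum>j<J. P t i j - Q0 i j)"
    by (simp add: sum_subtractf)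
  ultimately have "(\<lambda>J. \<Sum>i\<le>M. \<Sum>j<J. P t i j - Q0 i j) \<longlonglongrightarrow> N (P t) - N Q0" by simp
  with l0 have "N (P t) - N Q0 = 0" using LIMSEQ_unique by blast
  then show ?thesis using N_P0 by simp
qed

end


theorem proposition3:
  fixes M :: nat and x0 y0 :: nat
    and lam :: "real \<Rightarrow> nat \<Rightarrow> real"
    and f :: "real \<Rightarrow> real"
    and mu :: "nat \<Rightarrow> nat \<Rightarrow> nat \<Rightarrow> real"
  assumes M_pos: "1 \<le> M"
    and x0: "x0 \<le> M"
    and lam_nonneg: "\<forall>t\<ge>0. \<forall>x\<le>M. 0 \<le> lam t x"
    and lam_cadlag: "\<forall>x\<le>M. cadlag_on_nonneg (\<lambda>t. lam t x)"
    and lam_M: "\<forall>t\<ge>0. lam t M = 0"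
    and lam_bdd: "\<forall>T>0. \<exists>B. \<forall>t\<in>{0..T}. \<forall>x\<le>M. \<bar>lam t x\<bar> \<le> B"
    and f_cont: "continuous_on UNIV f"
    and f_bounds: "\<exists>fl fu. 0 < fl \<and> (\<forall>x. fl \<le> f x \<and> f x \<le> fu)"
    and mu_offdiag: "\<forall>k\<le>M. \<forall>i j. i \<noteq> j \<longrightarrow> 0 \<le> mu k i j"
    and mu_diag: "\<forall>k\<le>M. \<forall>i. mu k i i \<le> 0"
    and mu_rows: "\<forall>k\<le>M. \<forall>i. summable (\<lambda>j. mu k i j) \<and> (\<Sum>j. mu k i j) = 0"
    and mu_bdd: "\<forall>k\<le>M. \<exists>B. \<forall>i. \<bar>mu k i i\<bar> \<le> B"
  shows "\<exists>P. is_solution M lam f mu x0 y0 P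
            \<and> (\<forall>Q. is_solution M lam f mu x0 y0 Q \<longrightarrow> (\<forall>t\<ge>0. Q t = P t))
            \<and> (\<forall>t\<ge>0. (\<forall>i j. 0 \<le> P t i j) \<and> l1norm M (P t) = 1)"
proof -
  obtain fl fu where fb: "0 < fl" "\<And>x. fl \<le> f x" "\<And>x. f x \<le> fu" using f_bounds by blast
  have "\<forall>k. \<exists>B. k \<le> M \<longrightarrow> (\<forall>i. \<bar>mu k i i\<bar> \<le> B)" using mu_bdd by auto
  then obtain Bk where Bk: "\<And>k i. k \<le> M \<Longrightarrow> \<bar>mu k i i\<bar> \<le> Bk k" by metis
  define Bm where "Bm = (\<Sum>k\<le>M. \<bar>Bk k\<bar>)"
  have mb: "\<bar>mu k i i\<bar> \<le> Bm" if k: "k \<le> M" for k i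
  proof -
    have "\<bar>Bk k\<bar> \<le> Bm" unfolding Bm_def using k by (intro member_le_sum) auto
    then show ?thesis using Bk[OF k, of i] by linarith
  qed
  interpret S: setting2 M lam f mu fl fu Bm x0 y0
    by unfold_locales (use M_pos x0 lam_nonneg lam_cadlag lam_M lam_bdd f_cont fb mu_offdiag mu_diag mu_rows mb in auto)
  have c1: "is_solution M lam f mu x0 y0 S.Plim" by (rule S.Plim_solution)
  have c2: "\<forall>Q. is_solution M lam f mu x0 y0 Q \<longrightarrow> (\<forall>t\<ge>0. Q t = S.Plim t)"
    using S.unique[OF _ c1] by blast
  have c3: "\<forall>t\<ge>0. (\<forall>i j. 0 \<le> S.Plim t i j) \<and> l1norm M (S.Plim t) = 1"
    using S.sol_nonneg[OF c1] S.norm_one[OF c1] by blast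
  show ?thesis using c1 c2 c3 by blast
qed


end
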